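(* Let $(G,t)$ be a problem instance, $X$ a tidy modulator of $G$, $x\in X$, and $P$ a simple path in $G-X$ visiting vertices $v_1,v_2,v_3,v_4\in N_G(x)$ in this order. Let $C$ be the connected component of $G-(X\cup\{v_1,v_4\})$ containing the vertices of $P$ strictly between $v_1$ and $v_4$. If $N_G(C)\cap X$ is a limit-1 subset for $(G-v_2x,t)$, then $(G,t)$ has a solution if and only if $(G-v_2x,t)$ has a solution, where $G-v_2x$ denotes $G$ with the edge $v_2x$ deleted.
   Context: $\mathrm{tw}$ is treewidth. A solution for a problem instance $(G,t)$ is $S\subseteq V(G)$ with $|S|\le t$ and $\mathrm{tw}(G-S)\le 2$. A modulator of $G$ is $X$ with $\mathrm{tw}(G-X)\le 2$; tidy if also $\mathrm{tw}(G-(X\setminus\{y\}))\le 2$ for all $y\in X$. A set $Z$ is a limit-1 subset for $(G,t)$ if every solution $S$ for $(G,t)$ satisfies $|Z\setminus S|\le 1$. $N_G(C)$ is the set of vertices outside $C$ adjacent to $C$. *)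

theory Defs
  imports Main
begin

definition graph :: "'a set \<Rightarrow> 'a set set \<Rightarrow> bool" where
  "graph V E \<longleftrightarrow> finite V \<and>
     (\<forall>e\<in>E. \<exists>u v. e = {u, v} \<and> u \<noteq> v \<and> u \<in> V \<and> v \<in> V)"

definition reach_in :: "'a set set \<Rightarrow> 'a set \<Rightarrow> 'a \<Rightarrow> 'a \<Rightarrow> bool" where
  "reach_in E S u v \<longleftrightarrow> u \<in> S \<and> v \<in> S \<and>
     (u, v) \<in> {(a, b). {a, b} \<in> E \<and> a \<in> S \<and> b \<in> S}\<^sup>*"

definition connected_in :: "'a set set \<Rightarrow> 'a set \<Rightarrow> bool" where
  "connected_in E S \<longleftrightarrow> (\<forall>u\<in>S. \<forall>v\<in>S. reach_in E S u v)"

definition is_tree :: "'b set \<Rightarrow> 'b set set \<Rightarrow> bool" where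
  "is_tree N F \<longleftrightarrow> graph N F \<and> N \<noteq> {} \<and> connected_in F N \<and> card F = card N - 1"

definition tw_le :: "'a set \<Rightarrow> 'a set set \<Rightarrow> nat \<Rightarrow> bool" where
  "tw_le V E k \<longleftrightarrow> (\<exists>(N :: nat set) F (B :: nat \<Rightarrow> 'a set).
     is_tree N F \<and>
     (\<forall>i\<in>N. B i \<subseteq> V \<and> card (B i) \<le> k + 1) \<and>
     (\<forall>v\<in>V. \<exists>i\<in>N. v \<in> B i) \<and>
     (\<forall>e\<in>E. \<exists>i\<in>N. e \<subseteq> B i) \<and>
     (\<forall>v\<in>V. connected_in F {i\<in>N. v \<in> B i}))"

definition del_edges :: "'a set set \<Rightarrow> 'a set \<Rightarrow> 'a set set" where
  "del_edges E S = {e\<in>E. e \<inter> S = {}}"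

definition solution :: "'a set \<Rightarrow> 'a set set \<Rightarrow> nat \<Rightarrow> 'a set \<Rightarrow> bool" where
  "solution V E t S \<longleftrightarrow> S \<subseteq> V \<and> card S \<le> t \<and> tw_le (V - S) (del_edges E S) 2"

definition modulator :: "'a set \<Rightarrow> 'a set set \<Rightarrow> 'a set \<Rightarrow> bool" where
  "modulator V E X \<longleftrightarrow> X \<subseteq> V \<and> tw_le (V - X) (del_edges E X) 2"

definition tidy_modulator :: "'a set \<Rightarrow> 'a set set \<Rightarrow> 'a set \<Rightarrow> bool" where
  "tidy_modulator V E X \<longleftrightarrow> modulator V E X \<and>
     (\<forall>y\<in>X. tw_le (V - (X - {y})) (del_edges E (X - {y})) 2)"

definition limit1 :: "'a set \<Rightarrow> 'a set set \<Rightarrow> nat \<Rightarrow> 'a set \<Rightarrow> bool" where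
  "limit1 V E t Z \<longleftrightarrow> (\<forall>S. solution V E t S \<longrightarrow> card (Z - S) \<le> 1)"

definition nbhd :: "'a set \<Rightarrow> 'a set set \<Rightarrow> 'a set \<Rightarrow> 'a set" where
  "nbhd V E C = {v\<in>V - C. \<exists>c\<in>C. {c, v} \<in> E}"

definition component :: "'a set \<Rightarrow> 'a set set \<Rightarrow> 'a set \<Rightarrow> bool" where
  "component V E C \<longleftrightarrow> (\<exists>w\<in>V. C = {u. reach_in E V w u})"

definition simple_path :: "'a set \<Rightarrow> 'a set set \<Rightarrow> 'a list \<Rightarrow> bool" where
  "simple_path V E P \<longleftrightarrow> P \<noteq> [] \<and> distinct P \<and> set P \<subseteq> V \<and>
     (\<forall>i. Suc i < length P \<longrightarrow> {P ! i, P ! Suc i} \<in> E)"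

end

theory Submission
  imports Defs
begin


definition rel :: "'a set set \<Rightarrow> 'a set \<Rightarrow> ('a \<times> 'a) set" where
  "rel E S = {(a, b). {a, b} \<in> E \<and> a \<in> S \<and> b \<in> S}"

lemma reach_in_rel: "reach_in E S u v \<longleftrightarrow> u \<in> S \<and> v \<in> S \<and> (u, v) \<in> (rel E S)\<^sup>*"
  unfolding reach_in_def rel_def by simp

lemma reach_refl: "u \<in> S \<Longrightarrow> reach_in E S u u"
  by (simp add: reach_in_rel)

lemma reach_edge: "{a, b} \<in> E \<Longrightarrow> a \<in> S \<Longrightarrow> b \<in> S \<Longrightarrow> reach_in E S a b"
  unfolding reach_in_rel rel_def by auto

lemma reach_trans: "reach_in E S u v \<Longrightarrow> reach_in E S v w \<Longrightarrow> reach_in E S u w"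
  unfolding reach_in_rel by auto

lemma rel_sym: "(a, b) \<in> rel E S \<Longrightarrow> (b, a) \<in> rel E S"
  unfolding rel_def by (auto simp: insert_commute)

lemma reach_sym: "reach_in E S u v \<Longrightarrow> reach_in E S v u"
proof -
  assume h: "reach_in E S u v"
  hence "(u, v) \<in> (rel E S)\<^sup>*" by (simp add: reach_in_rel)
  hence "(v, u) \<in> (rel E S)\<^sup>*"
  proof (induction rule: rtrancl_induct)
    case base then show ?case by simp
  next
    case (step y z) then show ?case
      by (meson converse_rtrancl_into_rtrancl rel_sym)
  qed
  with h show ?thesis by (simp add: reach_in_rel)
qed

lemma reach_step: "reach_in E S u y \<Longrightarrow> {y, z} \<in> E \<Longrightarrow> z \<in> S \<Longrightarrow> reach_in E S u z"
  by (meson reach_edge reach_in_def reach_trans)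

lemma reach_map:
  assumes "reach_in E S u v"
    and "\<And>a b. {a, b} \<in> E \<Longrightarrow> a \<in> S \<Longrightarrow> b \<in> S \<Longrightarrow> {f a, f b} \<in> E'"
    and "f ` S \<subseteq> S'"
  shows "reach_in E' S' (f u) (f v)"
proof -
  from assms(1) have "(u, v) \<in> (rel E S)\<^sup>*" "u \<in> S" by (auto simp: reach_in_rel)
  then show ?thesis
  proof (induction rule: rtrancl_induct)
    case base then show ?case using assms(3) by (auto intro: reach_refl)
  next
    case (step y z)
    then have "{f y, f z} \<in> E'" "f z \<in> S'" using assms(2,3) unfolding rel_def by auto
    then show ?case using step reach_step by metis
  qed
qed

lemma reach_mono:
  assumes "reach_in E S u v" "S \<subseteq> S'"
    and "\<And>a b. {a, b} \<in> E \<Longrightarrow> a \<in> S \<Longrightarrow> b \<in> S \<Longrightarrow> {a, b} \<in> E'"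
  shows "reach_in E' S' u v"
  using reach_map[of E S u v id E' S'] assms by auto

lemma reach_induct[consumes 1, case_names base step]:
  assumes "reach_in E S u v"
    and "P u"
    and "\<And>y z. reach_in E S u y \<Longrightarrow> {y, z} \<in> E \<Longrightarrow> y \<in> S \<Longrightarrow> z \<in> S \<Longrightarrow> P y \<Longrightarrow> P z"
  shows "P v"
proof -
  from assms(1) have "(u, v) \<in> (rel E S)\<^sup>*" "u \<in> S" by (auto simp: reach_in_rel)
  then have "reach_in E S u v \<and> P v"
  proof (induction rule: rtrancl_induct)
    case base then show ?case using assms(2) by (auto intro: reach_refl)
  next
    case (step y z)
    then show ?case using assms(3) unfolding rel_def
      by (auto intro: reach_step)
  qed
  then show ?thesis by simp
qed

lemma reach_first_step:
  assumes "reach_in E S a b" "a \<noteq> b"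
  shows "\<exists>c. {a, c} \<in> E \<and> c \<in> S - {a} \<and> reach_in E (S - {a}) c b"
proof -
  have "b \<noteq> a \<longrightarrow> (\<exists>c. {a, c} \<in> E \<and> c \<in> S - {a} \<and> reach_in E (S - {a}) c b)"
    using assms(1)
  proof (induction rule: reach_induct)
    case base then show ?case by simp
  next
    case (step y z)
    show ?case
    proof
      assume "z \<noteq> a"
      show "\<exists>c. {a, c} \<in> E \<and> c \<in> S - {a} \<and> reach_in E (S - {a}) c z"
      proof (cases "y = a")
        case True
        then show ?thesis using step \<open>z \<noteq> a\<close> by (auto intro: reach_refl)
      next
        case False
        then obtain c where "{a, c} \<in> E" "c \<in> S - {a}" "reach_in E (S - {a}) c y" using step by auto
        then show ?thesis using step \<open>z \<noteq> a\<close> by (meson DiffI reach_step singletonD)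
      qed
    qed
  qed
  then show ?thesis using assms by simp
qed

lemma reach_last_step:
  assumes "reach_in E S a b" "a \<noteq> b"
  shows "\<exists>c\<in>S. {c, b} \<in> E"
proof -
  have "b \<noteq> a \<longrightarrow> (\<exists>c\<in>S. {c, b} \<in> E)" using assms(1)
    by (induction rule: reach_induct) auto
  then show ?thesis using assms by simp
qed

lemma reach_closed:
  assumes "reach_in E S w u"
  shows "reach_in E {z. reach_in E S w z} w u"
  using assms
proof (induction rule: reach_induct)
  case base then show ?case using assms by (auto intro: reach_refl simp: reach_in_def)
next
  case (step y z)
  then show ?case by (auto intro: reach_step)
qed


lemma graph_finite_edges: "graph N F \<Longrightarrow> finite F"
proof -
  assume g: "graph N F"
  hence "F \<subseteq> Pow N" unfolding graph_def by auto
  moreover have "finite N" using g unfolding graph_def by simp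
  ultimately show ?thesis by (meson finite_Pow_iff finite_subset)
qed

lemma graph_edge: "graph N F \<Longrightarrow> e \<in> F \<Longrightarrow> \<exists>u v. e = {u, v} \<and> u \<noteq> v \<and> u \<in> N \<and> v \<in> N"
  unfolding graph_def by auto

lemma degree_sum:
  assumes "graph N F"
  shows "(\<Sum>v\<in>N. card {e\<in>F. v \<in> e}) = 2 * card F"
proof -
  have fN: "finite N" using assms unfolding graph_def by simp
  have fF: "finite F" using assms graph_finite_edges by auto
  have "(\<Sum>v\<in>N. card {e\<in>F. v \<in> e}) = (\<Sum>v\<in>N. \<Sum>e\<in>F. if v \<in> e then 1 else 0)"
    using fF by (simp add: sum.If_cases Int_def)
  also have "\<dots> = (\<Sum>e\<in>F. \<Sum>v\<in>N. if v \<in> e then 1 else 0)"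
    by (rule sum.swap)
  also have "\<dots> = (\<Sum>e\<in>F. 2)"
  proof (rule sum.cong)
    fix e assume "e \<in> F"
    then obtain u v where e: "e = {u, v}" "u \<noteq> v" "u \<in> N" "v \<in> N" using graph_edge[OF assms] by blast
    have "(\<Sum>w\<in>N. if w \<in> e then 1 else 0) = card (N \<inter> e)"
      using fN by (simp add: sum.If_cases)
    also have "N \<inter> e = {u, v}" using e by auto
    finally show "(\<Sum>w\<in>N. if w \<in> e then 1 else (0::nat)) = 2" using e by simp
  qed simp
  finally show ?thesis by simp
qed

lemma tree_leaf:
  assumes "is_tree N F" "2 \<le> card N"
  shows "\<exists>l p. l \<in> N \<and> p \<in> N \<and> l \<noteq> p \<and> {l, p} \<in> F \<and> (\<forall>e\<in>F. l \<in> e \<longrightarrow> e = {l, p})"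
proof -
  have g: "graph N F" and con: "connected_in F N" and cF: "card F = card N - 1"
    using assms unfolding is_tree_def by auto
  have fN: "finite N" using g unfolding graph_def by simp
  have fF: "finite F" using g graph_finite_edges by auto
  have deg1: "1 \<le> card {e\<in>F. v \<in> e}" if "v \<in> N" for v
  proof -
    have "\<exists>w\<in>N. w \<noteq> v"
    proof (rule ccontr)
      assume "\<not> ?thesis"
      hence "N \<subseteq> {v}" by auto
      hence "card N \<le> 1" using card_mono[OF _ \<open>N \<subseteq> {v}\<close>] by simp
      thus False using assms(2) by simp
    qed
    then obtain w where "w \<in> N" "w \<noteq> v" by auto
    hence "reach_in F N v w" using con that unfolding connected_in_def by auto
    then obtain c where "{v, c} \<in> F" using reach_first_step \<open>w \<noteq> v\<close> by metis
    hence "{v, c} \<in> {e\<in>F. v \<in> e}" by simp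
    moreover have "finite {e\<in>F. v \<in> e}" using fF by simp
    ultimately show ?thesis by (metis One_nat_def Suc_leI card_gt_0_iff empty_iff)
  qed
  have "\<exists>l\<in>N. card {e\<in>F. l \<in> e} \<le> 1"
  proof (rule ccontr)
    assume "\<not> ?thesis"
    hence "\<forall>v\<in>N. 2 \<le> card {e\<in>F. v \<in> e}" by auto
    hence "(\<Sum>v\<in>N. (2::nat)) \<le> (\<Sum>v\<in>N. card {e\<in>F. v \<in> e})" by (intro sum_mono) auto
    hence "2 * card N \<le> 2 * card F" using degree_sum[OF g] by simp
    thus False using cF assms(2) by simp
  qed
  then obtain l where l: "l \<in> N" "card {e\<in>F. l \<in> e} \<le> 1" by auto
  hence "card {e\<in>F. l \<in> e} = 1" using deg1[OF l(1)] by simp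
  then obtain e0 where e0: "{e\<in>F. l \<in> e} = {e0}" using card_1_singletonE by blast
  hence "e0 \<in> F" "l \<in> e0" by auto
  then obtain u v where uv: "e0 = {u, v}" "u \<noteq> v" "u \<in> N" "v \<in> N" using graph_edge[OF g] by blast
  define p where "p = (if u = l then v else u)"
  have e0p: "e0 = {l, p}" and "p \<noteq> l" "p \<in> N" using uv \<open>l \<in> e0\<close> unfolding p_def by auto
  show ?thesis
    apply (rule exI[of _ l], rule exI[of _ p])
    using l(1) \<open>p \<noteq> l\<close> \<open>p \<in> N\<close> \<open>e0 \<in> F\<close> e0p e0 by auto
qed

lemma leaf_reach:
  assumes "reach_in F T u v" "u \<noteq> l"
    and leaf: "\<forall>e\<in>F. l \<in> e \<longrightarrow> e = {l, p}" "p \<noteq> l"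
  shows "(v \<noteq> l \<longrightarrow> reach_in (F - {{l, p}}) (T - {l}) u v) \<and>
         (v = l \<longrightarrow> reach_in (F - {{l, p}}) (T - {l}) u p)"
  using assms(1)
proof (induction rule: reach_induct)
  case base
  then show ?case using assms(1,2) by (auto intro: reach_refl simp: reach_in_def)
next
  case (step y z)
  show ?case
  proof (cases "z = l")
    case True
    then have "{y, l} = {l, p}" using step leaf by auto
    then have "y = p" using \<open>p \<noteq> l\<close> by (metis doubleton_eq_iff)
    then show ?thesis using step True \<open>p \<noteq> l\<close> by auto
  next
    case False
    show ?thesis
    proof (cases "y = l")
      case True
      then have "{l, z} = {l, p}" using step leaf by auto
      then have "z = p" using False by (metis doubleton_eq_iff)
      then show ?thesis using step True by auto
    next
      case False2: False
      then have "{y, z} \<noteq> {l, p}" using False by auto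
      then show ?thesis using step False False2 by (auto intro: reach_step)
    qed
  qed
qed


lemma leaf_adj:
  assumes "reach_in F T w l" "w \<noteq> l"
    and leaf: "\<forall>e\<in>F. l \<in> e \<longrightarrow> e = {l, p}" "p \<noteq> l"
  shows "p \<in> T"
proof -
  obtain c where "c \<in> T" "{c, l} \<in> F" using reach_last_step[OF assms(1,2)] by auto
  then have "{c, l} = {l, p}" using leaf by auto
  then have "c = p \<or> c = l" by (metis doubleton_eq_iff)
  moreover have "c \<noteq> l" using \<open>{c, l} = {l, p}\<close> \<open>p \<noteq> l\<close> by auto
  ultimately show ?thesis using \<open>c \<in> T\<close> by simp
qed

lemma tree_remove_leaf:
  assumes "is_tree N F" "l \<in> N" "p \<in> N" "l \<noteq> p" "{l, p} \<in> F"
    and leaf: "\<forall>e\<in>F. l \<in> e \<longrightarrow> e = {l, p}"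
  shows "is_tree (N - {l}) (F - {{l, p}})"
proof -
  have g: "graph N F" and con: "connected_in F N" and cF: "card F = card N - 1"
    using assms unfolding is_tree_def by auto
  have fN: "finite N" using g unfolding graph_def by simp
  have fF: "finite F" using g graph_finite_edges by auto
  have g2: "graph (N - {l}) (F - {{l, p}})"
    unfolding graph_def
  proof (intro conjI ballI)
    show "finite (N - {l})" using fN by simp
    fix e assume e: "e \<in> F - {{l, p}}"
    then obtain u v where "e = {u, v}" "u \<noteq> v" "u \<in> N" "v \<in> N" using graph_edge[OF g] by blast
    moreover have "l \<notin> e" using e leaf by auto
    ultimately show "\<exists>u v. e = {u, v} \<and> u \<noteq> v \<and> u \<in> N - {l} \<and> v \<in> N - {l}" by auto
  qed
  have "card (F - {{l, p}}) = card F - 1" using assms(5) fF by simp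
  also have "\<dots> = card (N - {l}) - 1" using cF assms(2) fN by simp
  finally have c2: "card (F - {{l, p}}) = card (N - {l}) - 1" .
  have con2: "connected_in (F - {{l, p}}) (N - {l})"
    unfolding connected_in_def
  proof (intro ballI)
    fix u v assume "u \<in> N - {l}" "v \<in> N - {l}"
    then have "reach_in F N u v" using con unfolding connected_in_def by auto
    then show "reach_in (F - {{l, p}}) (N - {l}) u v"
      using leaf_reach[of F N u v l p] \<open>u \<in> N - {l}\<close> \<open>v \<in> N - {l}\<close> leaf assms(4) by auto
  qed
  show ?thesis unfolding is_tree_def using g2 c2 con2 assms(3,4) by auto
qed


lemma helly:
  assumes "is_tree N F"
    and "\<forall>T\<in>TT. T \<noteq> {} \<and> T \<subseteq> N \<and> connected_in F T"
    and "\<forall>T1\<in>TT. \<forall>T2\<in>TT. T1 \<inter> T2 \<noteq> {}"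
  shows "\<exists>n\<in>N. \<forall>T\<in>TT. n \<in> T"
  using assms
proof (induction "card N" arbitrary: N F TT rule: less_induct)
  case less
  have g: "graph N F" and ne: "N \<noteq> {}" using less.prems(1) unfolding is_tree_def by auto
  have fN: "finite N" using g unfolding graph_def by simp
  show ?case
  proof (cases "card N \<le> 1")
    case True
    have "card N \<noteq> 0" using ne fN by simp
    hence "card N = 1" using True by simp
    then obtain n where "N = {n}" by (rule card_1_singletonE)
    have "n \<in> T" if "T \<in> TT" for T
    proof -
      have "T \<noteq> {}" "T \<subseteq> {n}" using less.prems(2) that \<open>N = {n}\<close> by auto
      then show ?thesis by auto
    qed
    then show ?thesis using \<open>N = {n}\<close> by auto
  next
    case False
    hence "2 \<le> card N" by simp
    then obtain l p where lp: "l \<in> N" "p \<in> N" "l \<noteq> p" "{l, p} \<in> F"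
      and leaf: "\<forall>e\<in>F. l \<in> e \<longrightarrow> e = {l, p}"
      using tree_leaf[OF less.prems(1)] by blast
    show ?thesis
    proof (cases "{l} \<in> TT")
      case True
      have "l \<in> T" if "T \<in> TT" for T
      proof -
        have "T \<inter> {l} \<noteq> {}" using less.prems(3) that True by blast
        then show ?thesis by auto
      qed
      then show ?thesis using lp(1) by auto
    next
      case False
      define TT' where "TT' = (\<lambda>T. T - {l}) ` TT"
      have tree': "is_tree (N - {l}) (F - {{l, p}})"
        using tree_remove_leaf[OF less.prems(1) lp leaf] .
      have pT: "p \<in> T" if "T \<in> TT" "l \<in> T" for T
      proof -
        have "T \<noteq> {}" "T \<noteq> {l}" using that less.prems(2) False by auto
        then obtain w where "w \<in> T" "w \<noteq> l" by auto
        have "connected_in F T" using less.prems(2) that(1) by blast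
        then have "reach_in F T w l" using \<open>w \<in> T\<close> that(2) unfolding connected_in_def by blast
        then show ?thesis using leaf_adj \<open>w \<noteq> l\<close> leaf lp(3) by metis
      qed
      have h1: "\<forall>T\<in>TT'. T \<noteq> {} \<and> T \<subseteq> N - {l} \<and> connected_in (F - {{l, p}}) T"
      proof
        fix T' assume "T' \<in> TT'"
        then obtain T where T: "T \<in> TT" "T' = T - {l}" unfolding TT'_def by auto
        have "T \<noteq> {}" "T \<subseteq> N" "connected_in F T" using T(1) less.prems(2) by auto
        have "T \<noteq> {l}" using T(1) False by auto
        have "T' \<noteq> {}" using T \<open>T \<noteq> {}\<close> \<open>T \<noteq> {l}\<close> by auto
        moreover have "T' \<subseteq> N - {l}" using T \<open>T \<subseteq> N\<close> by auto
        moreover have "connected_in (F - {{l, p}}) T'"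
          unfolding connected_in_def
        proof (intro ballI)
          fix u v assume "u \<in> T'" "v \<in> T'"
          then have "reach_in F T u v" using \<open>connected_in F T\<close> T unfolding connected_in_def by auto
          then show "reach_in (F - {{l, p}}) T' u v"
            using leaf_reach[of F T u v l p] \<open>u \<in> T'\<close> \<open>v \<in> T'\<close> leaf lp(3) T by auto
        qed
        ultimately show "T' \<noteq> {} \<and> T' \<subseteq> N - {l} \<and> connected_in (F - {{l, p}}) T'" by simp
      qed
      have h2: "\<forall>T1\<in>TT'. \<forall>T2\<in>TT'. T1 \<inter> T2 \<noteq> {}"
      proof (intro ballI)
        fix T1' T2' assume "T1' \<in> TT'" "T2' \<in> TT'"
        then obtain T1 T2 where T: "T1 \<in> TT" "T2 \<in> TT" "T1' = T1 - {l}" "T2' = T2 - {l}"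
          unfolding TT'_def by auto
        have "T1 \<inter> T2 \<noteq> {}" using less.prems(3) T(1,2) by blast
        then obtain n where "n \<in> T1" "n \<in> T2" by blast
        show "T1' \<inter> T2' \<noteq> {}"
        proof (cases "n = l")
          case True
          then have "p \<in> T1" "p \<in> T2" using pT T \<open>n \<in> T1\<close> \<open>n \<in> T2\<close> by auto
          then show ?thesis using T lp(3) by auto
        next
          case False
          then show ?thesis using T \<open>n \<in> T1\<close> \<open>n \<in> T2\<close> by auto
        qed
      qed
      have c: "card (N - {l}) < card N" using card_Diff1_less[OF fN lp(1)] .
      have "\<exists>n\<in>N - {l}. \<forall>T\<in>TT'. n \<in> T"
        by (rule less.hyps[OF c tree' h1 h2])
      then obtain n where "n \<in> N - {l}" "\<forall>T\<in>TT'. n \<in> T" by blast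
      then show ?thesis unfolding TT'_def by auto
    qed
  qed
qed


definition td :: "'a set \<Rightarrow> 'a set set \<Rightarrow> nat \<Rightarrow> nat set \<Rightarrow> nat set set \<Rightarrow> (nat \<Rightarrow> 'a set) \<Rightarrow> bool" where
  "td V E k N F B \<longleftrightarrow> is_tree N F \<and>
     (\<forall>i\<in>N. B i \<subseteq> V \<and> card (B i) \<le> k + 1) \<and>
     (\<forall>v\<in>V. \<exists>i\<in>N. v \<in> B i) \<and>
     (\<forall>e\<in>E. \<exists>i\<in>N. e \<subseteq> B i) \<and>
     (\<forall>v\<in>V. connected_in F {i\<in>N. v \<in> B i})"

lemma tw_le_td: "tw_le V E k \<longleftrightarrow> (\<exists>N F B. td V E k N F B)"
  unfolding tw_le_def td_def by auto

lemma tdD: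
  assumes "td V E k N F B"
  shows "is_tree N F" "\<And>i. i \<in> N \<Longrightarrow> B i \<subseteq> V" "\<And>i. i \<in> N \<Longrightarrow> card (B i) \<le> k + 1"
    "\<And>v. v \<in> V \<Longrightarrow> \<exists>i\<in>N. v \<in> B i" "\<And>e. e \<in> E \<Longrightarrow> \<exists>i\<in>N. e \<subseteq> B i"
    "\<And>v. v \<in> V \<Longrightarrow> connected_in F {i\<in>N. v \<in> B i}"
  using assms unfolding td_def by auto

lemma conn_mono_eq: "connected_in F S \<Longrightarrow> S = S' \<Longrightarrow> connected_in F S'" by simp

lemma reach_mono_set: "reach_in E S u v \<Longrightarrow> S \<subseteq> S' \<Longrightarrow> reach_in E S' u v"
  by (rule reach_mono) auto

lemma connD: "connected_in F S \<Longrightarrow> u \<in> S \<Longrightarrow> v \<in> S \<Longrightarrow> reach_in F S u v"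
  unfolding connected_in_def by blast

lemma conn_union_int:
  assumes "connected_in F S1" "connected_in F S2" "c \<in> S1" "c \<in> S2"
  shows "connected_in F (S1 \<union> S2)"
  unfolding connected_in_def
proof (intro ballI)
  have r: "reach_in F (S1 \<union> S2) u c" if "u \<in> S1 \<union> S2" for u
  proof (cases "u \<in> S1")
    case True
    show ?thesis by (rule reach_mono_set[OF connD[OF assms(1) True assms(3)]]) blast
  next
    case False
    then have "u \<in> S2" using that by blast
    show ?thesis by (rule reach_mono_set[OF connD[OF assms(2) \<open>u \<in> S2\<close> assms(4)]]) blast
  qed
  fix u v assume "u \<in> S1 \<union> S2" "v \<in> S1 \<union> S2"
  show "reach_in F (S1 \<union> S2) u v" using reach_trans[OF r[OF \<open>u \<in> _\<close>] reach_sym[OF r[OF \<open>v \<in> _\<close>]]] .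
qed

lemma conn_union_edge:
  assumes "connected_in F S1" "connected_in F S2" "a \<in> S1" "b \<in> S2" "{a, b} \<in> F"
  shows "connected_in F (S1 \<union> S2)"
  unfolding connected_in_def
proof (intro ballI)
  have "reach_in F (S1 \<union> S2) a b" by (rule reach_edge) (use assms in auto)
  then have ab: "reach_in F (S1 \<union> S2) b a" by (rule reach_sym)
  have r: "reach_in F (S1 \<union> S2) u a" if "u \<in> S1 \<union> S2" for u
  proof (cases "u \<in> S1")
    case True
    show ?thesis by (rule reach_mono_set[OF connD[OF assms(1) True assms(3)]]) blast
  next
    case False
    then have "u \<in> S2" using that by blast
    have "reach_in F (S1 \<union> S2) u b" by (rule reach_mono_set[OF connD[OF assms(2) \<open>u \<in> S2\<close> assms(4)]]) blast
    then show ?thesis using reach_trans[OF _ ab] by blast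
  qed
  fix u v assume "u \<in> S1 \<union> S2" "v \<in> S1 \<union> S2"
  show "reach_in F (S1 \<union> S2) u v" using reach_trans[OF r[OF \<open>u \<in> _\<close>] reach_sym[OF r[OF \<open>v \<in> _\<close>]]] .
qed

lemma conn_image:
  assumes "connected_in F S" "\<And>a b. {a, b} \<in> F \<Longrightarrow> a \<in> S \<Longrightarrow> b \<in> S \<Longrightarrow> {f a, f b} \<in> F'"
  shows "connected_in F' (f ` S)"
  unfolding connected_in_def
proof (intro ballI)
  fix u v assume "u \<in> f ` S" "v \<in> f ` S"
  then obtain u0 v0 where "u0 \<in> S" "v0 \<in> S" "u = f u0" "v = f v0" by blast
  have "reach_in F S u0 v0" by (rule connD[OF assms(1) \<open>u0 \<in> S\<close> \<open>v0 \<in> S\<close>])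
  have "reach_in F' (f ` S) (f u0) (f v0)"
    by (rule reach_map[of F S u0 v0 f F' "f ` S", OF \<open>reach_in F S u0 v0\<close> assms(2)]) auto
  then show "reach_in F' (f ` S) u v" using \<open>u = f u0\<close> \<open>v = f v0\<close> by simp
qed

lemma conn_empty: "connected_in F {}" unfolding connected_in_def by simp

lemma tw_sub:
  assumes "tw_le V E k" "finite V" "V' \<subseteq> V" "\<forall>e\<in>E'. e \<in> E \<and> e \<subseteq> V'"
  shows "tw_le V' E' k"
proof -
  obtain N F B where d: "td V E k N F B" using assms(1) tw_le_td by blast
  define B' where "B' i = B i \<inter> V'" for i
  have "td V' E' k N F B'"
    unfolding td_def
  proof (intro conjI ballI)
    show "is_tree N F" using tdD[OF d] by auto
  next
    fix i assume "i \<in> N"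
    then have "B i \<subseteq> V" "card (B i) \<le> k + 1" using tdD[OF d] by auto
    then have "finite (B i)" using assms(2) finite_subset by auto
    then have "card (B' i) \<le> card (B i)" unfolding B'_def by (simp add: card_mono)
    then show "B' i \<subseteq> V'" "card (B' i) \<le> k + 1" using \<open>card (B i) \<le> k + 1\<close> unfolding B'_def by auto
  next
    fix v assume "v \<in> V'"
    then obtain i where "i \<in> N" "v \<in> B i" using tdD[OF d] assms(3) by blast
    then show "\<exists>i\<in>N. v \<in> B' i" using \<open>v \<in> V'\<close> unfolding B'_def by auto
  next
    fix e assume "e \<in> E'"
    then have "e \<in> E" "e \<subseteq> V'" using assms(4) by auto
    then obtain i where "i \<in> N" "e \<subseteq> B i" using tdD[OF d] by blast
    then show "\<exists>i\<in>N. e \<subseteq> B' i" using \<open>e \<subseteq> V'\<close> unfolding B'_def by auto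
  next
    fix v assume "v \<in> V'"
    then have "connected_in F {i\<in>N. v \<in> B i}" using tdD[OF d] assms(3) by blast
    moreover have "{i\<in>N. v \<in> B i} = {i\<in>N. v \<in> B' i}" using \<open>v \<in> V'\<close> unfolding B'_def by auto
    ultimately show "connected_in F {i\<in>N. v \<in> B' i}" by simp
  qed
  then show ?thesis using tw_le_td by blast
qed

lemma tw_contract:
  assumes "tw_le V E k" "finite V" "a \<in> V" "b \<in> V" "a \<noteq> b" "{a, b} \<in> E"
    and "\<forall>e\<in>E'. e \<subseteq> V - {a} \<and> (e \<in> E \<or> (\<exists>c. e = {b, c} \<and> {a, c} \<in> E))"
  shows "tw_le (V - {a}) E' k"
proof -
  obtain N F B where d: "td V E k N F B" using assms(1) tw_le_td by blast
  define B' where "B' i = (if a \<in> B i then insert b (B i - {a}) else B i)" for i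
  have "td (V - {a}) E' k N F B'"
    unfolding td_def
  proof (intro conjI ballI)
    show "is_tree N F" using tdD[OF d] by auto
  next
    fix i assume "i \<in> N"
    then have "B i \<subseteq> V" "card (B i) \<le> k + 1" using tdD[OF d] by auto
    then have fin: "finite (B i)" using assms(2) finite_subset by auto
    have "card (B' i) \<le> card (B i)"
    proof (cases "a \<in> B i")
      case True
      have "card (insert b (B i - {a})) \<le> Suc (card (B i - {a}))" using fin by (simp add: card_insert_if)
      also have "\<dots> = card (B i)"
      proof -
        have "card (B i) > 0" using True fin card_gt_0_iff by blast
        then show ?thesis using True fin by simp
      qed
      finally show ?thesis unfolding B'_def using True by simp
    qed (simp add: B'_def)
    then show "card (B' i) \<le> k + 1" using \<open>card (B i) \<le> k + 1\<close> by simp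
    show "B' i \<subseteq> V - {a}" using \<open>B i \<subseteq> V\<close> assms(4,5) unfolding B'_def by auto
  next
    fix v assume "v \<in> V - {a}"
    then obtain i where "i \<in> N" "v \<in> B i" using tdD[OF d] by blast
    then show "\<exists>i\<in>N. v \<in> B' i" using \<open>v \<in> V - {a}\<close> unfolding B'_def by auto
  next
    fix e assume "e \<in> E'"
    then have esub: "e \<subseteq> V - {a}" and ee: "e \<in> E \<or> (\<exists>c. e = {b, c} \<and> {a, c} \<in> E)" using assms(7) by auto
    show "\<exists>i\<in>N. e \<subseteq> B' i"
    proof (cases "e \<in> E")
      case True
      then obtain i where "i \<in> N" "e \<subseteq> B i" using tdD[OF d] by blast
      then show ?thesis using esub unfolding B'_def by (intro bexI[of _ i]) auto
    next
      case False
      then obtain c where c: "e = {b, c}" "{a, c} \<in> E" using ee by auto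
      then obtain i where "i \<in> N" "{a, c} \<subseteq> B i" using tdD[OF d] by blast
      moreover have "c \<noteq> a" using esub c by auto
      ultimately show ?thesis using c unfolding B'_def by (intro bexI[of _ i]) auto
    qed
  next
    fix v assume v: "v \<in> V - {a}"
    show "connected_in F {i\<in>N. v \<in> B' i}"
    proof (cases "v = b")
      case False
      then have "{i\<in>N. v \<in> B' i} = {i\<in>N. v \<in> B i}" using v unfolding B'_def by auto
      moreover have "connected_in F {i\<in>N. v \<in> B i}" using tdD[OF d] v by blast
      ultimately show ?thesis by simp
    next
      case True
      have eq: "{i\<in>N. v \<in> B' i} = {i\<in>N. b \<in> B i} \<union> {i\<in>N. a \<in> B i}"
        using True unfolding B'_def by auto
      obtain i0 where "i0 \<in> N" "{a, b} \<subseteq> B i0" using tdD[OF d] assms(6) by blast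
      have "connected_in F ({i\<in>N. b \<in> B i} \<union> {i\<in>N. a \<in> B i})"
        apply (rule conn_union_int[of _ _ _ i0])
        using tdD(6)[OF d] assms(3,4) \<open>i0 \<in> N\<close> \<open>{a, b} \<subseteq> B i0\<close> by auto
      then show ?thesis using eq by simp
    qed
  qed
  then show ?thesis using tw_le_td by blast
qed


lemma tree_join:
  fixes NA NB :: "nat set"
  assumes tA: "is_tree NA FA" and tB: "is_tree NB FB" and ia: "ia \<in> NA" and ib: "ib \<in> NB"
  shows "is_tree ((\<lambda>n. 2 * n) ` NA \<union> (\<lambda>n. Suc (2 * n)) ` NB)
     ((`) (\<lambda>n. 2 * n) ` FA \<union> (`) (\<lambda>n. Suc (2 * n)) ` FB \<union> {{2 * ia, Suc (2 * ib)}})"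
    (is "is_tree ?N ?F")
proof -
  define f :: "nat \<Rightarrow> nat" where "f n = 2 * n" for n
  define g :: "nat \<Rightarrow> nat" where "g n = Suc (2 * n)" for n
  have fg: "f a \<noteq> g b" for a b unfolding f_def g_def by presburger
  have injf: "inj f" unfolding f_def by (rule injI) simp
  have injg: "inj g" unfolding g_def by (rule injI) simp
  have N_eq: "?N = f ` NA \<union> g ` NB" unfolding f_def g_def by simp
  have F_eq: "?F = (`) f ` FA \<union> (`) g ` FB \<union> {{f ia, g ib}}" unfolding f_def g_def by simp
  have gA: "graph NA FA" and gB: "graph NB FB" using tA tB unfolding is_tree_def by auto
  have fNA: "finite NA" and fNB: "finite NB" using gA gB unfolding graph_def by auto
  have fFA: "finite FA" and fFB: "finite FB" using gA gB graph_finite_edges by auto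
  have cA: "card FA = card NA - 1" and cB: "card FB = card NB - 1" using tA tB unfolding is_tree_def by auto
  have neA: "card NA \<ge> 1" using ia fNA by (metis One_nat_def Suc_leI card_gt_0_iff empty_iff)
  have neB: "card NB \<ge> 1" using ib fNB by (metis One_nat_def Suc_leI card_gt_0_iff empty_iff)
  let ?N' = "f ` NA \<union> g ` NB"
  let ?F' = "(`) f ` FA \<union> (`) g ` FB \<union> {{f ia, g ib}}"
  have graph': "graph ?N' ?F'"
    unfolding graph_def
  proof (intro conjI ballI)
    show "finite ?N'" using fNA fNB by simp
    fix e assume "e \<in> ?F'"
    then consider (a) e0 where "e0 \<in> FA" "e = f ` e0" | (b) e0 where "e0 \<in> FB" "e = g ` e0"
      | (c) "e = {f ia, g ib}" by blast
    then show "\<exists>u v. e = {u, v} \<and> u \<noteq> v \<and> u \<in> ?N' \<and> v \<in> ?N'"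
    proof cases
      case a
      then obtain u v where "e0 = {u, v}" "u \<noteq> v" "u \<in> NA" "v \<in> NA" using graph_edge[OF gA] by blast
      then show ?thesis using a injf by (intro exI[of _ "f u"] exI[of _ "f v"]) (auto simp: inj_eq)
    next
      case b
      then obtain u v where "e0 = {u, v}" "u \<noteq> v" "u \<in> NB" "v \<in> NB" using graph_edge[OF gB] by blast
      then show ?thesis using b injg by (intro exI[of _ "g u"] exI[of _ "g v"]) (auto simp: inj_eq)
    next
      case c
      then show ?thesis using fg ia ib by auto
    qed
  qed
  have cardN: "card ?N' = card NA + card NB"
  proof -
    have "f ` NA \<inter> g ` NB = {}" using fg by auto
    then have "card ?N' = card (f ` NA) + card (g ` NB)" using fNA fNB by (simp add: card_Un_disjoint)
    also have "\<dots> = card NA + card NB" using injf injg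
      by (simp add: card_image inj_on_subset)
    finally show ?thesis .
  qed
  have cardF: "card ?F' = card FA + card FB + 1"
  proof -
    have neF: "e \<noteq> {}" if "e \<in> FA \<or> e \<in> FB" for e
      using that graph_edge[OF gA] graph_edge[OF gB] by blast
    have d1: "(`) f ` FA \<inter> (`) g ` FB = {}"
    proof (rule ccontr)
      assume "\<not> ?thesis"
      then obtain e0 e1 where "e0 \<in> FA" "e1 \<in> FB" "f ` e0 = g ` e1" by blast
      moreover obtain u where "u \<in> e0" using neF \<open>e0 \<in> FA\<close> by blast
      ultimately have "f u \<in> g ` e1" by blast
      then show False using fg by auto
    qed
    have d2: "{f ia, g ib} \<notin> (`) f ` FA \<union> (`) g ` FB"
    proof
      assume "{f ia, g ib} \<in> (`) f ` FA \<union> (`) g ` FB"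
      then obtain e0 where "{f ia, g ib} = f ` e0 \<or> {f ia, g ib} = g ` e0" by blast
      then show False
      proof
        assume "{f ia, g ib} = f ` e0"
        then have "g ib \<in> f ` e0" by blast
        then show False using fg by (metis imageE)
      next
        assume "{f ia, g ib} = g ` e0"
        then have "f ia \<in> g ` e0" by blast
        then show False using fg by (metis imageE)
      qed
    qed
    have i1: "inj_on ((`) f) FA" using injf by (simp add: inj_on_def inj_image_eq_iff)
    have i2: "inj_on ((`) g) FB" using injg by (simp add: inj_on_def inj_image_eq_iff)
    have "card ?F' = card ((`) f ` FA \<union> (`) g ` FB) + 1"
      using d2 fFA fFB by simp
    also have "card ((`) f ` FA \<union> (`) g ` FB) = card ((`) f ` FA) + card ((`) g ` FB)"
      using d1 fFA fFB by (simp add: card_Un_disjoint)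
    also have "\<dots> = card FA + card FB" using i1 i2 by (simp add: card_image)
    finally show ?thesis .
  qed
  have edgeA: "{f a, f b} \<in> ?F'" if "{a, b} \<in> FA" for a b
  proof -
    have "f ` {a, b} \<in> (`) f ` FA" using that by blast
    then show ?thesis by simp
  qed
  have edgeB: "{g a, g b} \<in> ?F'" if "{a, b} \<in> FB" for a b
  proof -
    have "g ` {a, b} \<in> (`) g ` FB" using that by blast
    then show ?thesis by simp
  qed
  have toia: "reach_in ?F' ?N' n (f ia)" if "n \<in> ?N'" for n
  proof -
    from that consider (a) u where "u \<in> NA" "n = f u" | (b) w where "w \<in> NB" "n = g w" by blast
    then show ?thesis
    proof cases
      case a
      have "reach_in FA NA u ia" using tA a ia unfolding is_tree_def connected_in_def by blast
      then have "reach_in ?F' ?N' (f u) (f ia)"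
        by (rule reach_map[of FA NA u ia f ?F' ?N', OF _ edgeA]) auto
      then show ?thesis using a by simp
    next
      case b
      have "reach_in FB NB w ib" using tB b ib unfolding is_tree_def connected_in_def by blast
      then have r: "reach_in ?F' ?N' (g w) (g ib)"
        by (rule reach_map[of FB NB w ib g ?F' ?N', OF _ edgeB]) auto
      have "{g ib, f ia} \<in> ?F'" by (simp add: insert_commute)
      then have "reach_in ?F' ?N' (g w) (f ia)" using reach_step[OF r] ia by blast
      then show ?thesis using b by simp
    qed
  qed
  have conn': "connected_in ?F' ?N'"
    unfolding connected_in_def
  proof (intro ballI)
    fix u v assume "u \<in> ?N'" "v \<in> ?N'"
    show "reach_in ?F' ?N' u v" using reach_trans[OF toia[OF \<open>u \<in> ?N'\<close>] reach_sym[OF toia[OF \<open>v \<in> ?N'\<close>]]] .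
  qed
  have "is_tree ?N' ?F'"
    unfolding is_tree_def using graph' conn' cardN cardF cA cB neA neB ia by auto
  then show ?thesis using N_eq F_eq by simp
qed


lemma bag_for:
  assumes d: "td A EA k NA FA BA"
    and K: "K = {} \<or> (\<exists>u\<in>A. K = {u}) \<or> K \<in> EA"
  shows "\<exists>i\<in>NA. K \<subseteq> BA i"
proof -
  have "NA \<noteq> {}" using tdD(1)[OF d] unfolding is_tree_def by simp
  then show ?thesis using K tdD(4,5)[OF d] by blast
qed

lemma tw_glue:
  assumes "tw_le A EA k" "tw_le B EB k"
    and cl: "A \<inter> B = {} \<or> (\<exists>u. A \<inter> B = {u}) \<or> (A \<inter> B \<in> EA \<and> A \<inter> B \<in> EB)"
    and ed: "\<forall>e\<in>E. e \<in> EA \<or> e \<in> EB"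
  shows "tw_le (A \<union> B) E k"
proof -
  obtain NA FA BA where dA: "td A EA k NA FA BA" using assms(1) tw_le_td by blast
  obtain NB FB BB where dB: "td B EB k NB FB BB" using assms(2) tw_le_td by blast
  obtain ia where ia: "ia \<in> NA" "A \<inter> B \<subseteq> BA ia"
    using bag_for[OF dA, of "A \<inter> B"] cl by blast
  obtain ib where ib: "ib \<in> NB" "A \<inter> B \<subseteq> BB ib"
    using bag_for[OF dB, of "A \<inter> B"] cl by blast
  define f :: "nat \<Rightarrow> nat" where "f n = 2 * n" for n
  define g :: "nat \<Rightarrow> nat" where "g n = Suc (2 * n)" for n
  define N where "N = f ` NA \<union> g ` NB"
  define F where "F = (`) f ` FA \<union> (`) g ` FB \<union> {{f ia, g ib}}"
  define Bg where "Bg n = (if even n then BA (n div 2) else BB (n div 2))" for n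
  have Bf: "Bg (f i) = BA i" for i unfolding Bg_def f_def by simp
  have Bgg: "Bg (g i) = BB i" for i unfolding Bg_def g_def by simp
  have fg: "f a \<noteq> g b" for a b unfolding f_def g_def by presburger
  have tree: "is_tree N F"
    using tree_join[OF tdD(1)[OF dA] tdD(1)[OF dB] ia(1) ib(1)] unfolding N_def F_def f_def g_def by simp
  have edgeA: "{f a, f b} \<in> F" if "{a, b} \<in> FA" for a b
  proof -
    have "f ` {a, b} \<in> (`) f ` FA" using that by blast
    then show ?thesis unfolding F_def by simp
  qed
  have edgeB: "{g a, g b} \<in> F" if "{a, b} \<in> FB" for a b
  proof -
    have "g ` {a, b} \<in> (`) g ` FB" using that by blast
    then show ?thesis unfolding F_def by simp
  qed
  have "td (A \<union> B) E k N F Bg"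
    unfolding td_def
  proof (intro conjI ballI)
    show "is_tree N F" by (rule tree)
  next
    fix n assume "n \<in> N"
    then consider (a) i where "i \<in> NA" "n = f i" | (b) i where "i \<in> NB" "n = g i" unfolding N_def by blast
    then have "Bg n \<subseteq> A \<union> B \<and> card (Bg n) \<le> k + 1"
    proof cases
      case a
      then show ?thesis using tdD(2,3)[OF dA, of i] Bf[of i] by auto
    next
      case b
      then show ?thesis using tdD(2,3)[OF dB, of i] Bgg[of i] by auto
    qed
    then show "Bg n \<subseteq> A \<union> B" "card (Bg n) \<le> k + 1" by auto
  next
    fix v assume "v \<in> A \<union> B"
    then show "\<exists>i\<in>N. v \<in> Bg i"
    proof
      assume "v \<in> A"
      then obtain i where "i \<in> NA" "v \<in> BA i" using tdD(4)[OF dA] by blast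
      then show ?thesis using Bf unfolding N_def by (intro bexI[of _ "f i"]) auto
    next
      assume "v \<in> B"
      then obtain i where "i \<in> NB" "v \<in> BB i" using tdD(4)[OF dB] by blast
      then show ?thesis using Bgg unfolding N_def by (intro bexI[of _ "g i"]) auto
    qed
  next
    fix e assume "e \<in> E"
    then have "e \<in> EA \<or> e \<in> EB" using ed by blast
    then show "\<exists>i\<in>N. e \<subseteq> Bg i"
    proof
      assume "e \<in> EA"
      then obtain i where "i \<in> NA" "e \<subseteq> BA i" using tdD(5)[OF dA] by blast
      then show ?thesis using Bf unfolding N_def by (intro bexI[of _ "f i"]) auto
    next
      assume "e \<in> EB"
      then obtain i where "i \<in> NB" "e \<subseteq> BB i" using tdD(5)[OF dB] by blast
      then show ?thesis using Bgg unfolding N_def by (intro bexI[of _ "g i"]) auto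
    qed
  next
    fix v assume v: "v \<in> A \<union> B"
    define SA where "SA = {i\<in>NA. v \<in> BA i}"
    define SB where "SB = {i\<in>NB. v \<in> BB i}"
    have eq: "{n\<in>N. v \<in> Bg n} = f ` SA \<union> g ` SB"
    proof
      show "{n\<in>N. v \<in> Bg n} \<subseteq> f ` SA \<union> g ` SB"
      proof
        fix n assume "n \<in> {n\<in>N. v \<in> Bg n}"
        then have "n \<in> N" "v \<in> Bg n" by auto
        then consider (a) i where "i \<in> NA" "n = f i" | (b) i where "i \<in> NB" "n = g i" unfolding N_def by blast
        then show "n \<in> f ` SA \<union> g ` SB"
        proof cases
          case a then show ?thesis using \<open>v \<in> Bg n\<close> Bf unfolding SA_def by auto
        next
          case b then show ?thesis using \<open>v \<in> Bg n\<close> Bgg unfolding SB_def by auto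
        qed
      qed
    next
      show "f ` SA \<union> g ` SB \<subseteq> {n\<in>N. v \<in> Bg n}"
        unfolding SA_def SB_def N_def using Bf Bgg by auto
    qed
    have cA: "connected_in F (f ` SA)"
    proof (cases "v \<in> A")
      case True
      then have "connected_in FA SA" using tdD(6)[OF dA] unfolding SA_def by blast
      then show ?thesis by (rule conn_image) (rule edgeA)
    next
      case False
      then have "SA = {}" using tdD(2)[OF dA] unfolding SA_def by blast
      then show ?thesis using conn_empty by simp
    qed
    have cB: "connected_in F (g ` SB)"
    proof (cases "v \<in> B")
      case True
      then have "connected_in FB SB" using tdD(6)[OF dB] unfolding SB_def by blast
      then show ?thesis by (rule conn_image) (rule edgeB)
    next
      case False
      then have "SB = {}" using tdD(2)[OF dB] unfolding SB_def by blast
      then show ?thesis using conn_empty by simp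
    qed
    have "connected_in F (f ` SA \<union> g ` SB)"
    proof (cases "v \<in> A \<and> v \<in> B")
      case True
      then have "f ia \<in> f ` SA" "g ib \<in> g ` SB" using ia ib unfolding SA_def SB_def by auto
      moreover have "{f ia, g ib} \<in> F" unfolding F_def by simp
      ultimately show ?thesis using conn_union_edge[OF cA cB] by blast
    next
      case False
      then have "SA = {} \<or> SB = {}" using tdD(2)[OF dA] tdD(2)[OF dB] unfolding SA_def SB_def by blast
      then show ?thesis using cA cB by auto
    qed
    then show "connected_in F {n\<in>N. v \<in> Bg n}" using eq by simp
  qed
  then show ?thesis using tw_le_td by blast
qed

lemma nodes_conn:
  assumes d: "td W E0 k N F B" and Y: "Y \<subseteq> W" "connected_in E0 Y"
  shows "connected_in F {n\<in>N. B n \<inter> Y \<noteq> {}}"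
  unfolding connected_in_def
proof (intro ballI)
  let ?T = "{n\<in>N. B n \<inter> Y \<noteq> {}}"
  have sub: "{i\<in>N. u \<in> B i} \<subseteq> ?T" if "u \<in> Y" for u using that by auto
  fix n m assume n: "n \<in> ?T" and m: "m \<in> ?T"
  then obtain u where u: "u \<in> B n" "u \<in> Y" by auto
  from m obtain v where v: "v \<in> B m" "v \<in> Y" by auto
  have "reach_in E0 Y u v" using Y(2) u v unfolding connected_in_def by blast
  then have "\<forall>m'\<in>N. v \<in> B m' \<longrightarrow> reach_in F ?T n m'"
  proof (induction rule: reach_induct)
    case base
    show ?case
    proof (intro ballI impI)
      fix m' assume "m' \<in> N" "u \<in> B m'"
      have "connected_in F {i\<in>N. u \<in> B i}" using tdD(6)[OF d] u Y(1) by blast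
      moreover have "n \<in> {i\<in>N. u \<in> B i}" using u n by blast
      moreover have "m' \<in> {i\<in>N. u \<in> B i}" using \<open>m' \<in> N\<close> \<open>u \<in> B m'\<close> by blast
      ultimately have "reach_in F {i\<in>N. u \<in> B i} n m'" by (rule connD)
      then show "reach_in F ?T n m'" by (rule reach_mono_set[OF _ sub[OF u(2)]])
    qed
  next
    case (step y z)
    show ?case
    proof (intro ballI impI)
      fix m' assume "m' \<in> N" "z \<in> B m'"
      obtain p where p: "p \<in> N" "{y, z} \<subseteq> B p"
        using tdD(5)[OF d] \<open>{y, z} \<in> E0\<close> by blast
      have np: "reach_in F ?T n p" using step.IH p by blast
      have "connected_in F {i\<in>N. z \<in> B i}" using tdD(6)[OF d] step.hyps(4) Y(1) by blast
      moreover have "p \<in> {i\<in>N. z \<in> B i}" using p by blast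
      moreover have "m' \<in> {i\<in>N. z \<in> B i}" using \<open>m' \<in> N\<close> \<open>z \<in> B m'\<close> by blast
      ultimately have "reach_in F {i\<in>N. z \<in> B i} p m'" by (rule connD)
      then have "reach_in F ?T p m'" by (rule reach_mono_set[OF _ sub[OF step.hyps(4)]])
      then show "reach_in F ?T n m'" by (rule reach_trans[OF np])
    qed
  qed
  then show "reach_in F ?T n m" using m v by blast
qed

lemma no_K4:
  assumes tw: "tw_le W E0 2" and fin: "finite W"
    and sub: "Y1 \<subseteq> W" "Y2 \<subseteq> W" "Y3 \<subseteq> W" "Y4 \<subseteq> W"
    and ne: "Y1 \<noteq> {}" "Y2 \<noteq> {}" "Y3 \<noteq> {}" "Y4 \<noteq> {}"
    and con: "connected_in E0 Y1" "connected_in E0 Y2" "connected_in E0 Y3" "connected_in E0 Y4"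
    and dis: "Y1 \<inter> Y2 = {}" "Y1 \<inter> Y3 = {}" "Y1 \<inter> Y4 = {}" "Y2 \<inter> Y3 = {}" "Y2 \<inter> Y4 = {}" "Y3 \<inter> Y4 = {}"
    and adj: "\<exists>a\<in>Y1. \<exists>b\<in>Y2. {a, b} \<in> E0" "\<exists>a\<in>Y1. \<exists>b\<in>Y3. {a, b} \<in> E0"
      "\<exists>a\<in>Y1. \<exists>b\<in>Y4. {a, b} \<in> E0" "\<exists>a\<in>Y2. \<exists>b\<in>Y3. {a, b} \<in> E0"
      "\<exists>a\<in>Y2. \<exists>b\<in>Y4. {a, b} \<in> E0" "\<exists>a\<in>Y3. \<exists>b\<in>Y4. {a, b} \<in> E0"
  shows False
proof -
  obtain N F B where d: "td W E0 2 N F B" using tw tw_le_td by blast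
  define T where "T Y = {n\<in>N. B n \<inter> Y \<noteq> {}}" for Y
  have Tc: "connected_in F (T Y)" if "Y \<subseteq> W" "connected_in E0 Y" for Y
    unfolding T_def using nodes_conn[OF d that] .
  have Tne: "T Y \<noteq> {}" if h: "Y \<subseteq> W" "Y \<noteq> {}" for Y
  proof -
    obtain y where "y \<in> Y" using h by blast
    then obtain i where "i \<in> N" "y \<in> B i" using tdD(4)[OF d] h by blast
    then show ?thesis unfolding T_def using \<open>y \<in> Y\<close> by blast
  qed
  have Tm: "T Y \<inter> T Y' \<noteq> {}" if h: "\<exists>a\<in>Y. \<exists>b\<in>Y'. {a, b} \<in> E0" for Y Y'
  proof -
    obtain a b where "a \<in> Y" "b \<in> Y'" "{a, b} \<in> E0" using h by blast
    then obtain i where "i \<in> N" "{a, b} \<subseteq> B i" using tdD(5)[OF d] by blast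
    then show ?thesis unfolding T_def using \<open>a \<in> Y\<close> \<open>b \<in> Y'\<close> by blast
  qed
  have Tsub: "T Y \<subseteq> N" for Y unfolding T_def by blast
  define TT where "TT = {T Y1, T Y2, T Y3, T Y4}"
  have P: "T Y \<noteq> {} \<and> T Y \<subseteq> N \<and> connected_in F (T Y)"
    if "Y \<subseteq> W" "Y \<noteq> {}" "connected_in E0 Y" for Y
    using Tne[OF that(1,2)] Tsub[of Y] Tc[OF that(1,3)] by blast
  have h1: "\<forall>S\<in>TT. S \<noteq> {} \<and> S \<subseteq> N \<and> connected_in F S"
    unfolding TT_def using P[OF sub(1) ne(1) con(1)] P[OF sub(2) ne(2) con(2)]
      P[OF sub(3) ne(3) con(3)] P[OF sub(4) ne(4) con(4)] by simp
  have self: "T Y \<inter> T Y \<noteq> {}" if "Y \<subseteq> W" "Y \<noteq> {}" for Y using Tne[OF that] by simp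
  have m12: "T Y1 \<inter> T Y2 \<noteq> {}" by (rule Tm[OF adj(1)])
  have m13: "T Y1 \<inter> T Y3 \<noteq> {}" by (rule Tm[OF adj(2)])
  have m14: "T Y1 \<inter> T Y4 \<noteq> {}" by (rule Tm[OF adj(3)])
  have m23: "T Y2 \<inter> T Y3 \<noteq> {}" by (rule Tm[OF adj(4)])
  have m24: "T Y2 \<inter> T Y4 \<noteq> {}" by (rule Tm[OF adj(5)])
  have m34: "T Y3 \<inter> T Y4 \<noteq> {}" by (rule Tm[OF adj(6)])
  have m21: "T Y2 \<inter> T Y1 \<noteq> {}" using m12 by (subst Int_commute)
  have m31: "T Y3 \<inter> T Y1 \<noteq> {}" using m13 by (subst Int_commute)
  have m41: "T Y4 \<inter> T Y1 \<noteq> {}" using m14 by (subst Int_commute)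
  have m32: "T Y3 \<inter> T Y2 \<noteq> {}" using m23 by (subst Int_commute)
  have m42: "T Y4 \<inter> T Y2 \<noteq> {}" using m24 by (subst Int_commute)
  have m43: "T Y4 \<inter> T Y3 \<noteq> {}" using m34 by (subst Int_commute)
  have h2: "\<forall>S1\<in>TT. \<forall>S2\<in>TT. S1 \<inter> S2 \<noteq> {}"
    unfolding TT_def using m12 m13 m14 m23 m24 m34 m21 m31 m41 m32 m42 m43
      self[OF sub(1) ne(1)] self[OF sub(2) ne(2)] self[OF sub(3) ne(3)] self[OF sub(4) ne(4)]
    by simp
  obtain n where n: "n \<in> N" "\<forall>S\<in>TT. n \<in> S" using helly[OF tdD(1)[OF d] h1 h2] by blast
  have "n \<in> T Y1" "n \<in> T Y2" "n \<in> T Y3" "n \<in> T Y4" using n(2) unfolding TT_def by auto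
  then obtain a1 a2 a3 a4 where a: "a1 \<in> B n \<inter> Y1" "a2 \<in> B n \<inter> Y2" "a3 \<in> B n \<inter> Y3" "a4 \<in> B n \<inter> Y4"
    unfolding T_def by blast
  have distinct: "a1 \<noteq> a2" "a1 \<noteq> a3" "a1 \<noteq> a4" "a2 \<noteq> a3" "a2 \<noteq> a4" "a3 \<noteq> a4"
    using a dis by blast+
  have "B n \<subseteq> W" "card (B n) \<le> 3" using tdD(2,3)[OF d n(1)] by auto
  then have finB: "finite (B n)" using fin finite_subset by blast
  have "{a1, a2, a3, a4} \<subseteq> B n" using a by blast
  then have "card {a1, a2, a3, a4} \<le> card (B n)" using finB card_mono by blast
  moreover have "card {a1, a2, a3, a4} = 4" using distinct by simp
  ultimately show False using \<open>card (B n) \<le> 3\<close> by simp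
qed


locale S12 =
  fixes V :: "'a set" and E :: "'a set set" and t :: nat and X :: "'a set" and x :: 'a
    and P :: "'a list" and i1 i2 i3 i4 :: nat and v1 v2 v3 v4 :: 'a and C :: "'a set"
  assumes g: "graph V E"
    and tidy: "tidy_modulator V E X"
    and xX: "x \<in> X"
    and sp: "simple_path (V - X) (del_edges E X) P"
    and i12: "i1 < i2" and i23: "i2 < i3" and i34: "i3 < i4" and i4l: "i4 < length P"
    and P1: "P ! i1 = v1" and P2: "P ! i2 = v2" and P3: "P ! i3 = v3" and P4: "P ! i4 = v4"
    and nb: "{v1, v2, v3, v4} \<subseteq> nbhd V E {x}"
    and comp: "component (V - (X \<union> {v1, v4})) (del_edges E (X \<union> {v1, v4})) C"
    and inC: "\<forall>k. i1 < k \<and> k < i4 \<longrightarrow> P ! k \<in> C"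
    and lim: "limit1 V (E - {{v2, x}}) t (nbhd V E C \<inter> X)"
begin

lemma fV: "finite V" using g unfolding graph_def by simp

lemma edge_in: "{a, b} \<in> E \<Longrightarrow> a \<in> V \<and> b \<in> V"
proof -
  assume "{a, b} \<in> E"
  then obtain c d where "{a, b} = {c, d}" "c \<in> V" "d \<in> V" using g unfolding graph_def by blast
  then show ?thesis by (metis doubleton_eq_iff)
qed

lemma edge_form: "e \<in> E \<Longrightarrow> \<exists>a b. e = {a, b} \<and> a \<noteq> b \<and> a \<in> V \<and> b \<in> V"
  using g unfolding graph_def by blast

lemma edge_sub: "e \<in> E \<Longrightarrow> e \<subseteq> V" using edge_form by blast

lemma PV: "k < length P \<Longrightarrow> P ! k \<in> V \<and> P ! k \<notin> X"
  using sp unfolding simple_path_def by (meson DiffE nth_mem subsetD)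

lemma Pe: "Suc k < length P \<Longrightarrow> {P ! k, P ! Suc k} \<in> E"
  using sp unfolding simple_path_def del_edges_def by blast

lemma Pinj: "k < length P \<Longrightarrow> k' < length P \<Longrightarrow> P ! k = P ! k' \<Longrightarrow> k = k'"
  using sp unfolding simple_path_def by (simp add: nth_eq_iff_index_eq)

lemma vV: "v1 \<in> V" "v2 \<in> V" "v3 \<in> V" "v4 \<in> V" "v1 \<notin> X" "v2 \<notin> X" "v3 \<notin> X" "v4 \<notin> X"
  using PV[of i1] PV[of i2] PV[of i3] PV[of i4] i12 i23 i34 i4l P1 P2 P3 P4 by auto

lemma vdist: "v1 \<noteq> v2" "v1 \<noteq> v3" "v1 \<noteq> v4" "v2 \<noteq> v3" "v2 \<noteq> v4" "v3 \<noteq> v4"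
  using Pinj[of i1 i2] Pinj[of i1 i3] Pinj[of i1 i4] Pinj[of i2 i3] Pinj[of i2 i4] Pinj[of i3 i4]
    i12 i23 i34 i4l P1 P2 P3 P4 by auto

lemma xe: "{x, v1} \<in> E" "{x, v2} \<in> E" "{x, v3} \<in> E" "{x, v4} \<in> E"
  using nb unfolding nbhd_def by auto

lemma xV: "x \<in> V" using edge_in[OF xe(1)] by simp

lemma xne: "x \<noteq> v1" "x \<noteq> v2" "x \<noteq> v3" "x \<noteq> v4" using vV xX by auto

definition W0 where "W0 = V - (X \<union> {v1, v4})"

lemma Cw: "\<exists>w\<in>W0. C = {u. reach_in (del_edges E (X \<union> {v1, v4})) W0 w u}"
  using comp unfolding component_def W0_def by simp

lemma CW0: "C \<subseteq> W0" using Cw unfolding reach_in_def by auto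

lemma Cbasic: "C \<subseteq> V" "C \<inter> X = {}" "v1 \<notin> C" "v4 \<notin> C" "x \<notin> C"
  using CW0 xX unfolding W0_def by auto

lemma Cclos: "c \<in> C \<Longrightarrow> u \<in> W0 \<Longrightarrow> {c, u} \<in> E \<Longrightarrow> u \<in> C"
proof -
  assume a: "c \<in> C" "u \<in> W0" "{c, u} \<in> E"
  obtain w where w: "w \<in> W0" "C = {u. reach_in (del_edges E (X \<union> {v1, v4})) W0 w u}" using Cw by blast
  have "c \<in> W0" using a CW0 by blast
  have "c \<notin> X \<union> {v1, v4}" "u \<notin> X \<union> {v1, v4}" using \<open>c \<in> W0\<close> a(2) unfolding W0_def by blast+
  then have "{c, u} \<inter> (X \<union> {v1, v4}) = {}" by blast
  then have e: "{c, u} \<in> del_edges E (X \<union> {v1, v4})" using a(3) unfolding del_edges_def by blast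
  have "reach_in (del_edges E (X \<union> {v1, v4})) W0 w c" using a(1) w(2) by blast
  then have "reach_in (del_edges E (X \<union> {v1, v4})) W0 w u" by (rule reach_step[OF _ e a(2)])
  then show ?thesis using w(2) by blast
qed

lemma v23C: "v2 \<in> C" "v3 \<in> C"
  using inC i12 i23 i34 P2 P3 by auto

lemma Cnb: "c \<in> C \<Longrightarrow> {c, u} \<in> E \<Longrightarrow> u \<in> C \<or> u \<in> X \<or> u = v1 \<or> u = v4"
proof -
  assume a: "c \<in> C" "{c, u} \<in> E"
  then have "u \<in> V" using edge_in by blast
  then show ?thesis using Cclos[OF a(1) _ a(2)] unfolding W0_def by blast
qed

lemma Znb: "c \<in> C \<Longrightarrow> {c, u} \<in> E \<Longrightarrow> u \<in> X \<Longrightarrow> u \<in> nbhd V E C \<inter> X"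
proof -
  assume a: "c \<in> C" "{c, u} \<in> E" "u \<in> X"
  then have "u \<in> V" "u \<notin> C" using edge_in Cbasic by blast+
  then show ?thesis using a unfolding nbhd_def by blast
qed

lemma xZ: "x \<in> nbhd V E C \<inter> X"
  using Znb[OF v23C(1), of x] xe(2) xX by (simp add: insert_commute)

lemma tidyx: "tw_le (V - (X - {x})) (del_edges E (X - {x})) 2"
  using tidy xX unfolding tidy_modulator_def by blast

lemma XV: "X \<subseteq> V" using tidy unfolding tidy_modulator_def modulator_def by blast

end


context S12 begin

lemma del_sub: "e \<in> del_edges E S \<Longrightarrow> e \<subseteq> V - S"
  unfolding del_edges_def using edge_sub by blast

lemma dir1: "solution V E t S \<Longrightarrow> solution V (E - {{v2, x}}) t S"
proof -
  assume s: "solution V E t S"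
  then have tw: "tw_le (V - S) (del_edges E S) 2" "S \<subseteq> V" "card S \<le> t" unfolding solution_def by auto
  have "tw_le (V - S) (del_edges (E - {{v2, x}}) S) 2"
  proof (rule tw_sub[OF tw(1)])
    show "finite (V - S)" using fV by simp
    show "V - S \<subseteq> V - S" by simp
    show "\<forall>e\<in>del_edges (E - {{v2, x}}) S. e \<in> del_edges E S \<and> e \<subseteq> V - S"
    proof
      fix e assume "e \<in> del_edges (E - {{v2, x}}) S"
      then have "e \<in> del_edges E S" unfolding del_edges_def by blast
      then show "e \<in> del_edges E S \<and> e \<subseteq> V - S" using del_sub by blast
    qed
  qed
  then show ?thesis using tw unfolding solution_def by blast
qed

lemma caseA:
  assumes "solution V (E - {{v2, x}}) t S" "x \<in> S \<or> v2 \<in> S"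
  shows "solution V E t S"
proof -
  have "del_edges E S = del_edges (E - {{v2, x}}) S"
    unfolding del_edges_def using assms(2) by blast
  then show ?thesis using assms(1) unfolding solution_def by simp
qed

lemma ZS:
  assumes "solution V (E - {{v2, x}}) t S" "x \<notin> S" "u \<in> nbhd V E C \<inter> X" "u \<notin> S"
  shows "u = x"
proof (rule ccontr)
  assume "u \<noteq> x"
  let ?Z = "nbhd V E C \<inter> X"
  have c1: "card (?Z - S) \<le> 1" using lim assms(1) unfolding limit1_def by blast
  have fin: "finite (?Z - S)" using fV unfolding nbhd_def by (rule finite_subset[rotated]) auto
  have "{u, x} \<subseteq> ?Z - S" using assms xZ by blast
  then have "card {u, x} \<le> card (?Z - S)" using fin card_mono by blast
  then show False using c1 \<open>u \<noteq> x\<close> by simp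
qed

lemma Cnb':
  assumes "e \<in> E" "c \<in> C" "c \<in> e" "u \<in> e"
  shows "u \<in> C \<or> (u \<in> X \<and> u \<in> nbhd V E C \<inter> X) \<or> u = v1 \<or> u = v4"
proof (cases "u = c")
  case True then show ?thesis using assms by simp
next
  case False
  obtain a b where ab: "e = {a, b}" using edge_form[OF assms(1)] by blast
  then have "e = {c, u}" using assms(3,4) False by auto
  then have "{c, u} \<in> E" using assms(1) by simp
  then show ?thesis using Cnb[OF assms(2)] Znb[OF assms(2)] by blast
qed

lemma caseB:
  assumes sol: "solution V (E - {{v2, x}}) t S" and xS: "x \<notin> S" and v2S: "v2 \<notin> S"
    and SC: "S \<inter> C \<noteq> {}"
  shows "\<exists>S'. solution V E t S'"
proof -
  let ?E' = "E - {{v2, x}}"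
  have SV: "S \<subseteq> V" and cS: "card S \<le> t" and twS: "tw_le (V - S) (del_edges ?E' S) 2"
    using sol unfolding solution_def by auto
  have finS: "finite S" using SV fV finite_subset by blast
  define S' where "S' = insert x (S - C)"
  have "card (S - C) < card S" using SC finS by (intro psubset_card_mono) auto
  moreover have "card S' \<le> Suc (card (S - C))" unfolding S'_def using finS by (simp add: card_insert_if)
  ultimately have cS': "card S' \<le> t" using cS by simp
  have S'V: "S' \<subseteq> V" unfolding S'_def using SV xV by blast
  define K where "K = {v1, v4} - S"
  define A where "A = C \<union> K"
  define R where "R = V - S' - C"
  define EA where "EA = {e. e \<subseteq> A \<and> (e \<in> E \<or> e = {v1, v4})}"
  define EB where "EB = {e. e \<subseteq> R \<and> (e \<in> E \<or> e = {v1, v4})}"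
  have AX: "A \<inter> X = {}" unfolding A_def K_def using Cbasic vV by blast
  have AV: "A \<subseteq> V" unfolding A_def K_def using Cbasic vV by blast
  have RS: "R \<inter> S = {}" "x \<notin> R" unfolding R_def S'_def by blast+
  have twA: "tw_le A EA 2"
  proof -
    let ?V1 = "V - (X - {x})"
    let ?E1 = "del_edges E (X - {x})"
    have xv1: "{x, v1} \<in> ?E1" using xe(1) vV(5) unfolding del_edges_def by blast
    have xv4: "{x, v4} \<in> ?E1" using xe(4) vV(8) unfolding del_edges_def by blast
    have "tw_le (?V1 - {x}) EA 2"
    proof (rule tw_contract[OF tidyx _ _ _ xne(1) xv1])
      show "finite ?V1" using fV by simp
      show "x \<in> ?V1" using xV by blast
      show "v1 \<in> ?V1" using vV by blast
      show "\<forall>e\<in>EA. e \<subseteq> ?V1 - {x} \<and> (e \<in> ?E1 \<or> (\<exists>c. e = {v1, c} \<and> {x, c} \<in> ?E1))"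
      proof
        fix e assume e: "e \<in> EA"
        then have "e \<subseteq> A" unfolding EA_def by blast
        then have "e \<subseteq> ?V1 - {x}" using AX AV xX by blast
        moreover have "e \<in> ?E1 \<or> (\<exists>c. e = {v1, c} \<and> {x, c} \<in> ?E1)"
        proof (cases "e \<in> E")
          case True
          then have "e \<in> ?E1" using \<open>e \<subseteq> A\<close> AX unfolding del_edges_def by blast
          then show ?thesis by blast
        next
          case False
          then have "e = {v1, v4}" using e unfolding EA_def by blast
          then show ?thesis using xv4 by blast
        qed
        ultimately show "e \<subseteq> ?V1 - {x} \<and> (e \<in> ?E1 \<or> (\<exists>c. e = {v1, c} \<and> {x, c} \<in> ?E1))" by blast
      qed
    qed
    then show ?thesis
    proof (rule tw_sub)
      show "finite (?V1 - {x})" using fV by simp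
      show "A \<subseteq> ?V1 - {x}" using AX AV xX by blast
      show "\<forall>e\<in>EA. e \<in> EA \<and> e \<subseteq> A" unfolding EA_def by blast
    qed
  qed
  have twR: "tw_le R EB 2"
  proof -
    let ?V1 = "V - S"
    let ?E1 = "del_edges ?E' S"
    have EBE: "e \<in> ?E1" if "e \<subseteq> R" "e \<in> E" for e
    proof -
      have "x \<notin> e" using that RS by blast
      then have "e \<noteq> {v2, x}" by blast
      moreover have "e \<inter> S = {}" using that RS by blast
      ultimately show ?thesis using that unfolding del_edges_def by blast
    qed
    have RV: "R \<subseteq> V - S - {x}" unfolding R_def S'_def by blast
    show ?thesis
    proof (cases "v1 \<in> S")
      case True
      show ?thesis
      proof (rule tw_sub[OF twS])
        show "finite (V - S)" using fV by simp
        show "R \<subseteq> V - S" using RV by blast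
        show "\<forall>e\<in>EB. e \<in> ?E1 \<and> e \<subseteq> R"
        proof
          fix e assume e: "e \<in> EB"
          then have "e \<subseteq> R" unfolding EB_def by blast
          moreover have "e \<in> E"
          proof (rule ccontr)
            assume "e \<notin> E"
            then have "e = {v1, v4}" using e unfolding EB_def by blast
            then have "v1 \<in> R" using \<open>e \<subseteq> R\<close> by blast
            then show False using True RS by blast
          qed
          ultimately show "e \<in> ?E1 \<and> e \<subseteq> R" using EBE by blast
        qed
      qed
    next
      case False
      have xv1: "{x, v1} \<in> ?E1"
      proof -
        have "{x, v1} \<noteq> {v2, x}" using vdist(1) xne(1) by (metis doubleton_eq_iff)
        then show ?thesis using xe(1) xS False unfolding del_edges_def by blast
      qed
      have "tw_le (?V1 - {x}) EB 2"
      proof (rule tw_contract[OF twS _ _ _ xne(1) xv1])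
        show "finite ?V1" using fV by simp
        show "x \<in> ?V1" using xV xS by blast
        show "v1 \<in> ?V1" using vV False by blast
        show "\<forall>e\<in>EB. e \<subseteq> ?V1 - {x} \<and> (e \<in> ?E1 \<or> (\<exists>c. e = {v1, c} \<and> {x, c} \<in> ?E1))"
        proof
          fix e assume e: "e \<in> EB"
          then have "e \<subseteq> R" unfolding EB_def by blast
          then have "e \<subseteq> ?V1 - {x}" using RV by blast
          moreover have "e \<in> ?E1 \<or> (\<exists>c. e = {v1, c} \<and> {x, c} \<in> ?E1)"
          proof (cases "e \<in> E")
            case True
            then show ?thesis using EBE \<open>e \<subseteq> R\<close> by blast
          next
            case False
            then have ee: "e = {v1, v4}" using e unfolding EB_def by blast
            then have "v4 \<notin> S" using \<open>e \<subseteq> R\<close> RS by blast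
            have "{x, v4} \<noteq> {v2, x}" using vdist(5) xne(4) by (metis doubleton_eq_iff)
            then have "{x, v4} \<in> ?E1" using xe(4) xS \<open>v4 \<notin> S\<close> unfolding del_edges_def by blast
            then show ?thesis using ee by blast
          qed
          ultimately show "e \<subseteq> ?V1 - {x} \<and> (e \<in> ?E1 \<or> (\<exists>c. e = {v1, c} \<and> {x, c} \<in> ?E1))" by blast
        qed
      qed
      then show ?thesis
      proof (rule tw_sub)
        show "finite (?V1 - {x})" using fV by simp
        show "R \<subseteq> ?V1 - {x}" using RV by blast
        show "\<forall>e\<in>EB. e \<in> EB \<and> e \<subseteq> R" unfolding EB_def by blast
      qed
    qed
  qed
  have KR: "K \<subseteq> R" unfolding K_def R_def S'_def using vV Cbasic xne by blast
  have AR: "A \<inter> R = K" unfolding A_def R_def using KR unfolding R_def by blast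
  have AuR: "A \<union> R = V - S'"
  proof -
    have "C \<inter> S' = {}" unfolding S'_def using Cbasic by blast
    then show ?thesis unfolding A_def R_def using KR Cbasic unfolding R_def by blast
  qed
  have cl: "A \<inter> R = {} \<or> (\<exists>u. A \<inter> R = {u}) \<or> (A \<inter> R \<in> EA \<and> A \<inter> R \<in> EB)"
  proof (cases "v1 \<in> S \<or> v4 \<in> S")
    case True
    then have "K = {} \<or> K = {v1} \<or> K = {v4}" unfolding K_def by blast
    then show ?thesis using AR by blast
  next
    case False
    then have "K = {v1, v4}" unfolding K_def by blast
    then show ?thesis using AR KR unfolding EA_def EB_def A_def by blast
  qed
  have ed: "\<forall>e\<in>del_edges E S'. e \<in> EA \<or> e \<in> EB"
  proof
    fix e assume e: "e \<in> del_edges E S'"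
    then have eE: "e \<in> E" and eS': "e \<inter> S' = {}" unfolding del_edges_def by auto
    have eV: "e \<subseteq> V" using edge_sub[OF eE] .
    show "e \<in> EA \<or> e \<in> EB"
    proof (cases "e \<inter> C = {}")
      case True
      then have "e \<subseteq> R" using eV eS' unfolding R_def by blast
      then show ?thesis using eE unfolding EB_def by blast
    next
      case False
      then obtain c where c: "c \<in> e" "c \<in> C" by blast
      have "e \<subseteq> A"
      proof
        fix u assume u: "u \<in> e"
        have "u \<notin> S'" using u eS' by blast
        from Cnb'[OF eE c(2) c(1) u]
        have "u \<in> C \<or> (u \<in> X \<and> u \<in> nbhd V E C \<inter> X) \<or> u = v1 \<or> u = v4" .
        then show "u \<in> A"
        proof (elim disjE)
          assume "u \<in> C" then show ?thesis unfolding A_def by blast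
        next
          assume h: "u \<in> X \<and> u \<in> nbhd V E C \<inter> X"
          show ?thesis
          proof (cases "u \<in> S")
            case True
            then have "u \<in> S'" using h Cbasic unfolding S'_def by blast
            then show ?thesis using \<open>u \<notin> S'\<close> by blast
          next
            case False
            then have "u = x" using ZS[OF sol xS] h by blast
            then show ?thesis using \<open>u \<notin> S'\<close> unfolding S'_def by blast
          qed
        next
          assume "u = v1"
          then show ?thesis using \<open>u \<notin> S'\<close> Cbasic unfolding A_def K_def S'_def by blast
        next
          assume "u = v4"
          then show ?thesis using \<open>u \<notin> S'\<close> Cbasic unfolding A_def K_def S'_def by blast
        qed
      qed
      then show ?thesis using eE unfolding EA_def by blast
    qed
  qed
  have "tw_le (A \<union> R) (del_edges E S') 2" by (rule tw_glue[OF twA twR cl ed])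
  then have "solution V E t S'" using AuR S'V cS' unfolding solution_def by simp
  then show ?thesis by blast
qed

end


context S12 begin

lemma seg_conn:
  assumes "b \<le> length P" "\<And>k. a \<le> k \<Longrightarrow> k < b \<Longrightarrow> P ! k \<in> W"
    and E0: "\<And>k. a \<le> k \<Longrightarrow> Suc k < b \<Longrightarrow> {P ! k, P ! Suc k} \<in> E0"
  shows "connected_in E0 {P ! k | k. a \<le> k \<and> k < b}"
proof -
  let ?Y = "{P ! k | k. a \<le> k \<and> k < b}"
  have r: "reach_in E0 ?Y (P ! a) (P ! (a + d))" if "a + d < b" for d
    using that
  proof (induction d)
    case 0
    have pa: "P ! a \<in> ?Y" using 0 by auto
    have aa: "a + 0 = a" by simp
    show ?case unfolding aa by (rule reach_refl[OF pa])
  next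
    case (Suc d)
    have ih: "reach_in E0 ?Y (P ! a) (P ! (a + d))" using Suc by simp
    have e: "{P ! (a + d), P ! Suc (a + d)} \<in> E0" using E0[of "a + d"] Suc.prems by simp
    have m: "P ! Suc (a + d) \<in> ?Y" using Suc.prems by (intro CollectI exI[of _ "Suc (a + d)"]) simp
    have aa: "a + Suc d = Suc (a + d)" by simp
    show ?case unfolding aa by (rule reach_step[OF ih e m])
  qed
  have r2: "reach_in E0 ?Y (P ! a) (P ! k)" if "a \<le> k" "k < b" for k
  proof -
    have "k = a + (k - a)" using that by simp
    then show ?thesis using r[of "k - a"] that by simp
  qed
  show ?thesis
    unfolding connected_in_def
  proof (intro ballI)
    fix u v assume "u \<in> ?Y" "v \<in> ?Y"
    then obtain ku kv where "u = P ! ku" "a \<le> ku" "ku < b" "v = P ! kv" "a \<le> kv" "kv < b" by blast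
    then show "reach_in E0 ?Y u v" using reach_trans[OF reach_sym[OF r2[of ku]] r2[of kv]] by simp
  qed
qed

lemma sep:
  assumes sol: "solution V (E - {{v2, x}}) t S" and xS: "x \<notin> S" and v2S: "v2 \<notin> S"
    and SC: "S \<inter> C = {}" and v1S: "v1 \<notin> S" and v4S: "v4 \<notin> S"
    and r: "reach_in E (V - S - C - {x}) v1 v4"
  shows False
proof -
  let ?E' = "E - {{v2, x}}"
  let ?W = "V - S"
  let ?D = "V - S - C - {x}"
  let ?E0 = "del_edges ?E' S"
  have twS: "tw_le ?W ?E0 2" using sol unfolding solution_def by auto
  have E0J: "{a, b} \<in> ?E0" if "a \<in> ?W" "b \<in> ?W" "{a, b} \<in> E" "{a, b} \<noteq> {v2, x}" for a b
  proof -
    have "{a, b} \<noteq> {v2, x}" using that(4) by blast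
    moreover have "{a, b} \<inter> S = {}" using that(1,2) by blast
    ultimately show ?thesis using that(3) unfolding del_edges_def by blast
  qed
  have E0I: "{a, b} \<in> ?E0" if "a \<in> ?W" "b \<in> ?W" "{a, b} \<in> E" "x \<notin> {a, b}" for a b
    using E0J[OF that(1-3)] that(4) by blast
  have xW: "x \<in> ?W" using xV xS by blast
  have v1W: "v1 \<in> ?W" using vV v1S by blast
  have v4W: "v4 \<in> ?W" using vV v4S by blast
  have v3W: "v3 \<in> ?W" using v23C(2) Cbasic SC by blast
  have xvne: "{x, v1} \<noteq> {v2, x}" "{x, v3} \<noteq> {v2, x}" "{x, v4} \<noteq> {v2, x}"
    using vdist xne by (metis doubleton_eq_iff)+
  obtain c where c: "{v1, c} \<in> E" "c \<in> ?D - {v1}" "reach_in E (?D - {v1}) c v4"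
    using reach_first_step[OF r vdist(3)] by blast
  define Y1 where "Y1 = {x}"
  define Y2 where "Y2 = {P ! k | k. i1 \<le> k \<and> k < i3}"
  define Y3 where "Y3 = {P ! k | k. i3 \<le> k \<and> k < i4}"
  define Y4 where "Y4 = {u. reach_in E (?D - {v1}) c u}"
  have PW: "P ! k \<in> ?W" "P ! k \<notin> X" if "i1 \<le> k" "k \<le> i4" for k
  proof -
    have "k < length P" using that i4l by simp
    then show "P ! k \<notin> X" using PV by blast
    show "P ! k \<in> ?W"
    proof (cases "k = i1 \<or> k = i4")
      case True
      then show ?thesis using P1 P4 vV v1S v4S by auto
    next
      case False
      then have "P ! k \<in> C" using inC that by auto
      then show ?thesis using SC Cbasic by blast
    qed
  qed
  have PC: "P ! k \<in> C" if "i1 < k" "k < i4" for k using inC that by blast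
  have xP: "x \<noteq> P ! k" if "i1 \<le> k" "k \<le> i4" for k using PW(2)[OF that] xX by blast
  have Pedge: "{P ! k, P ! Suc k} \<in> ?E0" if "i1 \<le> k" "Suc k \<le> i4" for k
  proof (rule E0I)
    show "P ! k \<in> ?W" "P ! Suc k \<in> ?W" using PW that by auto
    show "{P ! k, P ! Suc k} \<in> E" using Pe that i4l by simp
    show "x \<notin> {P ! k, P ! Suc k}" using xP that by auto
  qed
  have sub: "Y1 \<subseteq> ?W" "Y2 \<subseteq> ?W" "Y3 \<subseteq> ?W" "Y4 \<subseteq> ?W"
    unfolding Y1_def Y2_def Y3_def Y4_def using xV xS PW i23 i34 i12
    by (auto simp: reach_in_def)
  have v4Y4: "v4 \<in> Y4" using c(3) unfolding Y4_def by blast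
  have ne: "Y1 \<noteq> {}" "Y2 \<noteq> {}" "Y3 \<noteq> {}" "Y4 \<noteq> {}"
    unfolding Y1_def Y2_def Y3_def using i12 i23 i34 v4Y4 by auto
  have con1: "connected_in ?E0 Y1" unfolding Y1_def connected_in_def by (auto intro: reach_refl)
  have con2: "connected_in ?E0 Y2" unfolding Y2_def
    by (rule seg_conn[of _ _ ?W]) (use i4l PW i23 i34 Pedge in auto)
  have con3: "connected_in ?E0 Y3" unfolding Y3_def
    by (rule seg_conn[of _ _ ?W]) (use i4l PW i23 i34 i12 Pedge in auto)
  have con4: "connected_in ?E0 Y4"
    unfolding connected_in_def
  proof (intro ballI)
    have cu: "reach_in ?E0 Y4 c u" if "u \<in> Y4" for u
    proof -
      have "reach_in E (?D - {v1}) c u" using that unfolding Y4_def by blast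
      then have "reach_in E Y4 c u" unfolding Y4_def by (rule reach_closed)
      then show ?thesis
      proof (rule reach_mono)
        show "Y4 \<subseteq> Y4" by simp
        fix a b assume "{a, b} \<in> E" "a \<in> Y4" "b \<in> Y4"
        then show "{a, b} \<in> ?E0" using E0I sub(4) unfolding Y4_def reach_in_def by blast
      qed
    qed
    fix u v assume "u \<in> Y4" "v \<in> Y4"
    show "reach_in ?E0 Y4 u v" using reach_trans[OF reach_sym[OF cu[OF \<open>u \<in> Y4\<close>]] cu[OF \<open>v \<in> Y4\<close>]] .
  qed
  have Y4D: "Y4 \<subseteq> ?D - {v1}" unfolding Y4_def reach_in_def by blast
  have Y2C: "Y2 \<subseteq> C \<union> {v1}"
  proof
    fix u assume "u \<in> Y2"
    then obtain k where k: "u = P ! k" "i1 \<le> k" "k < i3" unfolding Y2_def by blast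
    show "u \<in> C \<union> {v1}"
    proof (cases "k = i1")
      case True then show ?thesis using k P1 by simp
    next
      case False then show ?thesis using k PC i34 by simp
    qed
  qed
  have Y3C: "Y3 \<subseteq> C"
  proof
    fix u assume "u \<in> Y3"
    then obtain k where k: "u = P ! k" "i3 \<le> k" "k < i4" unfolding Y3_def by blast
    then show "u \<in> C" using PC i12 i23 by simp
  qed
  have dis: "Y1 \<inter> Y2 = {}" "Y1 \<inter> Y3 = {}" "Y1 \<inter> Y4 = {}" "Y2 \<inter> Y3 = {}" "Y2 \<inter> Y4 = {}" "Y3 \<inter> Y4 = {}"
  proof -
    show "Y1 \<inter> Y2 = {}" using Y2C Cbasic xne unfolding Y1_def by blast
    show "Y1 \<inter> Y3 = {}" using Y3C Cbasic unfolding Y1_def by blast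
    show "Y1 \<inter> Y4 = {}" using Y4D unfolding Y1_def by blast
    show "Y2 \<inter> Y4 = {}" using Y2C Y4D by blast
    show "Y3 \<inter> Y4 = {}" using Y3C Y4D by blast
    show "Y2 \<inter> Y3 = {}"
    proof (rule ccontr)
      assume "Y2 \<inter> Y3 \<noteq> {}"
      then obtain k k' where "P ! k = P ! k'" "k < i3" "i3 \<le> k'" "k' < i4"
        unfolding Y2_def Y3_def by blast
      then show False using Pinj[of k k'] i4l by simp
    qed
  qed
  have adj1: "\<exists>a\<in>Y1. \<exists>b\<in>Y2. {a, b} \<in> ?E0"
  proof -
    have "{x, v1} \<in> ?E0" by (rule E0J[OF xW v1W xe(1) xvne(1)])
    moreover have "v1 \<in> Y2" unfolding Y2_def using P1 i12 i23 by (intro CollectI exI[of _ i1]) simp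
    ultimately show ?thesis unfolding Y1_def by blast
  qed
  have adj2: "\<exists>a\<in>Y1. \<exists>b\<in>Y3. {a, b} \<in> ?E0"
  proof -
    have "v3 \<in> C" by (rule v23C(2))
    have "{x, v3} \<in> ?E0" by (rule E0J[OF xW v3W xe(3) xvne(2)])
    moreover have "v3 \<in> Y3" unfolding Y3_def using P3 i34 by (intro CollectI exI[of _ i3]) simp
    ultimately show ?thesis unfolding Y1_def by blast
  qed
  have adj3: "\<exists>a\<in>Y1. \<exists>b\<in>Y4. {a, b} \<in> ?E0"
  proof -
    have "{x, v4} \<in> ?E0" by (rule E0J[OF xW v4W xe(4) xvne(3)])
    then show ?thesis using v4Y4 unfolding Y1_def by blast
  qed
  have adj4: "\<exists>a\<in>Y2. \<exists>b\<in>Y3. {a, b} \<in> ?E0"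
  proof -
    have "{P ! (i3 - 1), P ! Suc (i3 - 1)} \<in> ?E0" by (rule Pedge) (use i12 i23 i34 in simp)+
    moreover have "Suc (i3 - 1) = i3" using i23 by simp
    moreover have "P ! (i3 - 1) \<in> Y2" unfolding Y2_def using i12 i23 by (intro CollectI exI[of _ "i3 - 1"]) auto
    moreover have "P ! i3 \<in> Y3" unfolding Y3_def using i34 by (intro CollectI exI[of _ i3]) simp
    ultimately show ?thesis by metis
  qed
  have adj5: "\<exists>a\<in>Y2. \<exists>b\<in>Y4. {a, b} \<in> ?E0"
  proof -
    have "c \<in> ?W" using c(2) by blast
    moreover have "x \<notin> {v1, c}" using c(2) xne(1) by blast
    ultimately have "{v1, c} \<in> ?E0" by (rule E0I[OF v1W _ c(1)])
    moreover have "v1 \<in> Y2" unfolding Y2_def using P1 i12 i23 by (intro CollectI exI[of _ i1]) simp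
    moreover have "c \<in> Y4" unfolding Y4_def using c(2) by (auto intro: reach_refl)
    ultimately show ?thesis by blast
  qed
  have adj6: "\<exists>a\<in>Y3. \<exists>b\<in>Y4. {a, b} \<in> ?E0"
  proof -
    have "{P ! (i4 - 1), P ! Suc (i4 - 1)} \<in> ?E0" by (rule Pedge) (use i12 i23 i34 in simp)+
    moreover have "Suc (i4 - 1) = i4" using i34 by simp
    moreover have "P ! (i4 - 1) \<in> Y3" unfolding Y3_def using i34 by (intro CollectI exI[of _ "i4 - 1"]) auto
    ultimately show ?thesis using v4Y4 P4 by metis
  qed
  have "finite ?W" using fV by simp
  show False
    by (rule no_K4[OF twS \<open>finite ?W\<close> sub ne con1 con2 con3 con4 dis adj1 adj2 adj3 adj4 adj5 adj6])
qed


lemma caseC: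
  assumes sol: "solution V (E - {{v2, x}}) t S" and xS: "x \<notin> S" and v2S: "v2 \<notin> S"
    and SC: "S \<inter> C = {}"
  shows "solution V E t S"
proof -
  let ?E' = "E - {{v2, x}}"
  let ?W = "V - S"
  let ?D = "V - S - C - {x}"
  have SV: "S \<subseteq> V" and cS: "card S \<le> t" and twS: "tw_le ?W (del_edges ?E' S) 2"
    using sol unfolding solution_def by auto
  define D1 where "D1 = {u. reach_in E ?D v1 u}"
  define K where "K = {v1, v4} - S"
  define A where "A = C \<union> {x} \<union> K"
  define B1 where "B1 = insert x D1"
  define B2 where "B2 = ?W - C - D1"
  define EA where "EA = {e\<in>E. e \<subseteq> A}"
  define EB1 where "EB1 = {e\<in>E. e \<subseteq> B1}"
  define EAB where "EAB = {e\<in>E. e \<subseteq> A \<or> e \<subseteq> B1}"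
  define EB2 where "EB2 = {e\<in>E. e \<subseteq> B2}"
  have D1D: "D1 \<subseteq> ?D" unfolding D1_def reach_in_def by blast
  have v1D1: "v1 \<in> D1" if "v1 \<notin> S"
  proof -
    have "v1 \<in> ?D" using vV that Cbasic xne by blast
    then show ?thesis unfolding D1_def by (blast intro: reach_refl)
  qed
  have v4D1: "v4 \<notin> D1"
  proof
    assume "v4 \<in> D1"
    then have r: "reach_in E ?D v1 v4" unfolding D1_def by blast
    then have "v1 \<notin> S" "v4 \<notin> S" unfolding reach_in_def by blast+
    then show False using sep[OF sol xS v2S SC _ _ r] by blast
  qed
  have xD1: "x \<notin> D1" using D1D by blast
  have CD1: "C \<inter> D1 = {}" using D1D by blast
  have CW: "C \<subseteq> ?W" using Cbasic SC by blast
  have AW: "A \<subseteq> ?W" unfolding A_def K_def using CW xV xS vV by blast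
  have AX: "A \<inter> (X - {x}) = {}" unfolding A_def K_def using Cbasic vV by blast
  have B1W: "B1 \<subseteq> ?W" unfolding B1_def using D1D xV xS by blast
  have v2B: "v2 \<notin> B1" "v2 \<notin> B2" unfolding B1_def B2_def using v23C(1) CD1 xne by blast+
  have fW: "finite ?W" using fV by simp
  have twA: "tw_le A EA 2"
  proof (rule tw_sub[OF tidyx])
    show "finite (V - (X - {x}))" using fV by simp
    show "A \<subseteq> V - (X - {x})" using AW AX by blast
    show "\<forall>e\<in>EA. e \<in> del_edges E (X - {x}) \<and> e \<subseteq> A"
      unfolding EA_def del_edges_def using AX by blast
  qed
  have twSub: "tw_le B EB 2" if "B \<subseteq> ?W" "v2 \<notin> B" "EB = {e\<in>E. e \<subseteq> B}" for B EB
  proof (rule tw_sub[OF twS fW that(1)])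
    show "\<forall>e\<in>EB. e \<in> del_edges ?E' S \<and> e \<subseteq> B"
    proof
      fix e assume "e \<in> EB"
      then have "e \<in> E" "e \<subseteq> B" using that(3) by auto
      moreover have "e \<noteq> {v2, x}" using \<open>e \<subseteq> B\<close> that(2) by blast
      moreover have "e \<inter> S = {}" using \<open>e \<subseteq> B\<close> that(1) by blast
      ultimately show "e \<in> del_edges ?E' S \<and> e \<subseteq> B" unfolding del_edges_def by blast
    qed
  qed
  have twB1: "tw_le B1 EB1 2" by (rule twSub[OF B1W v2B(1) EB1_def])
  have twB2: "tw_le B2 EB2 2" by (rule twSub[OF _ v2B(2) EB2_def]) (unfold B2_def, blast)
  have AB1: "A \<inter> B1 = insert x ({v1} - S)"
  proof
    show "A \<inter> B1 \<subseteq> insert x ({v1} - S)"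
      unfolding A_def B1_def K_def using CD1 v4D1 by blast
    show "insert x ({v1} - S) \<subseteq> A \<inter> B1"
      unfolding A_def B1_def K_def using v1D1 by blast
  qed
  have xv1A: "{x, v1} \<subseteq> A" if "v1 \<notin> S" unfolding A_def K_def using that by blast
  have cl1: "A \<inter> B1 = {} \<or> (\<exists>u. A \<inter> B1 = {u}) \<or> (A \<inter> B1 \<in> EA \<and> A \<inter> B1 \<in> EB1)"
  proof (cases "v1 \<in> S")
    case True
    then show ?thesis using AB1 by blast
  next
    case False
    then have "A \<inter> B1 = {x, v1}" using AB1 by blast
    moreover have "{x, v1} \<subseteq> B1" unfolding B1_def using v1D1 False by blast
    moreover have "{x, v1} \<in> EA" unfolding EA_def using xe(1) xv1A[OF False] by blast
    ultimately have "A \<inter> B1 \<in> EA \<and> A \<inter> B1 \<in> EB1" unfolding EB1_def using xe(1) by simp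
    then show ?thesis by blast
  qed
  have tw1: "tw_le (A \<union> B1) EAB 2"
    by (rule tw_glue[OF twA twB1 cl1]) (unfold EAB_def EA_def EB1_def, blast)
  have AB2: "(A \<union> B1) \<inter> B2 = insert x ({v4} - S)"
  proof
    show "(A \<union> B1) \<inter> B2 \<subseteq> insert x ({v4} - S)"
      unfolding A_def B1_def B2_def K_def using v1D1 by blast
    show "insert x ({v4} - S) \<subseteq> (A \<union> B1) \<inter> B2"
      unfolding A_def B1_def B2_def K_def using xV xS Cbasic xD1 vV v4D1 by blast
  qed
  have cl2: "(A \<union> B1) \<inter> B2 = {} \<or> (\<exists>u. (A \<union> B1) \<inter> B2 = {u}) \<or>
      ((A \<union> B1) \<inter> B2 \<in> EAB \<and> (A \<union> B1) \<inter> B2 \<in> EB2)"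
  proof (cases "v4 \<in> S")
    case True
    then show ?thesis using AB2 by blast
  next
    case False
    then have e: "(A \<union> B1) \<inter> B2 = {x, v4}" using AB2 by blast
    have "{x, v4} \<subseteq> A" unfolding A_def K_def using False by blast
    moreover have "{x, v4} \<subseteq> B2" using AB2 e by blast
    ultimately have "{x, v4} \<in> EAB" "{x, v4} \<in> EB2" using xe(4) unfolding EAB_def EB2_def by blast+
    then show ?thesis using e by simp
  qed
  have ed: "\<forall>e\<in>del_edges E S. e \<in> EAB \<or> e \<in> EB2"
  proof
    fix e assume e: "e \<in> del_edges E S"
    then have eE: "e \<in> E" and eS: "e \<inter> S = {}" unfolding del_edges_def by auto
    have eW: "e \<subseteq> ?W" using edge_sub[OF eE] eS by blast
    show "e \<in> EAB \<or> e \<in> EB2"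
    proof (cases "e \<inter> C = {}")
      case False
      then obtain c where c: "c \<in> e" "c \<in> C" by blast
      have "e \<subseteq> A"
      proof
        fix u assume u: "u \<in> e"
        have "u \<notin> S" using u eS by blast
        from Cnb'[OF eE c(2) c(1) u]
        have "u \<in> C \<or> (u \<in> X \<and> u \<in> nbhd V E C \<inter> X) \<or> u = v1 \<or> u = v4" .
        then show "u \<in> A"
        proof (elim disjE)
          assume "u \<in> C" then show ?thesis unfolding A_def by blast
        next
          assume h: "u \<in> X \<and> u \<in> nbhd V E C \<inter> X"
          then have "u = x" using ZS[OF sol xS] \<open>u \<notin> S\<close> by blast
          then show ?thesis unfolding A_def by blast
        next
          assume "u = v1" then show ?thesis using \<open>u \<notin> S\<close> unfolding A_def K_def by blast
        next
          assume "u = v4" then show ?thesis using \<open>u \<notin> S\<close> unfolding A_def K_def by blast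
        qed
      qed
      then show ?thesis using eE unfolding EAB_def by blast
    next
      case True
      show ?thesis
      proof (cases "e \<inter> D1 = {}")
        case True
        then have "e \<subseteq> B2" using eW \<open>e \<inter> C = {}\<close> unfolding B2_def by blast
        then show ?thesis using eE unfolding EB2_def by blast
      next
        case False
        then obtain d where d: "d \<in> e" "d \<in> D1" by blast
        have "e \<subseteq> B1"
        proof
          fix u assume u: "u \<in> e"
          show "u \<in> B1"
          proof (cases "u = x \<or> u = d")
            case True then show ?thesis using d unfolding B1_def by blast
          next
            case False
            obtain a b where ab: "e = {a, b}" using edge_form[OF eE] by blast
            then have edu: "e = {d, u}" using d(1) u False by auto
            have "u \<in> ?D" using u eW \<open>e \<inter> C = {}\<close> False by blast
            have "reach_in E ?D v1 d" using d(2) unfolding D1_def by blast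
            then have "reach_in E ?D v1 u" using reach_step[of E ?D v1 d u] eE edu \<open>u \<in> ?D\<close> by blast
            then show ?thesis unfolding B1_def D1_def by blast
          qed
        qed
        then show ?thesis using eE unfolding EAB_def by blast
      qed
    qed
  qed
  have "tw_le ((A \<union> B1) \<union> B2) (del_edges E S) 2"
    by (rule tw_glue[OF tw1 twB2 cl2 ed])
  moreover have "(A \<union> B1) \<union> B2 = ?W"
  proof
    have "B2 \<subseteq> ?W" unfolding B2_def by blast
    then show "(A \<union> B1) \<union> B2 \<subseteq> ?W" using AW B1W by blast
    have "C \<subseteq> A" unfolding A_def by blast
    moreover have "D1 \<subseteq> B1" unfolding B1_def by blast
    ultimately show "?W \<subseteq> (A \<union> B1) \<union> B2" unfolding B2_def by blast
  qed
  ultimately have "tw_le ?W (del_edges E S) 2" by simp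
  then show ?thesis using SV cS unfolding solution_def by blast
qed

lemma main: "(\<exists>S. solution V E t S) \<longleftrightarrow> (\<exists>S. solution V (E - {{v2, x}}) t S)"
proof
  assume "\<exists>S. solution V E t S"
  then show "\<exists>S. solution V (E - {{v2, x}}) t S" using dir1 by blast
next
  assume "\<exists>S. solution V (E - {{v2, x}}) t S"
  then obtain S where sol: "solution V (E - {{v2, x}}) t S" by blast
  show "\<exists>S. solution V E t S"
  proof (cases "x \<in> S \<or> v2 \<in> S")
    case True
    then show ?thesis using caseA[OF sol] by blast
  next
    case False
    then have xS: "x \<notin> S" and v2S: "v2 \<notin> S" by auto
    show ?thesis
    proof (cases "S \<inter> C = {}")
      case True
      then show ?thesis using caseC[OF sol xS v2S] by blast
    next
      case False
      then show ?thesis using caseB[OF sol xS v2S] by blast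
    qed
  qed
qed

end


theorem mainTheorem12:
  fixes V :: "'a set" and E :: "'a set set" and t :: nat and X :: "'a set" and x :: 'a
    and P :: "'a list" and i1 i2 i3 i4 :: nat and v1 v2 v3 v4 :: 'a and C :: "'a set"
  assumes "graph V E"
    and "tidy_modulator V E X"
    and "x \<in> X"
    and "simple_path (V - X) (del_edges E X) P"
    and "i1 < i2" and "i2 < i3" and "i3 < i4" and "i4 < length P"
    and "P ! i1 = v1" and "P ! i2 = v2" and "P ! i3 = v3" and "P ! i4 = v4"
    and "{v1, v2, v3, v4} \<subseteq> nbhd V E {x}"
    and "component (V - (X \<union> {v1, v4})) (del_edges E (X \<union> {v1, v4})) C"
    and "\<forall>k. i1 < k \<and> k < i4 \<longrightarrow> P ! k \<in> C"
    and "limit1 V (E - {{v2, x}}) t (nbhd V E C \<inter> X)"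
  shows "(\<exists>S. solution V E t S) \<longleftrightarrow> (\<exists>S. solution V (E - {{v2, x}}) t S)"
proof -
  interpret S12 V E t X x P i1 i2 i3 i4 v1 v2 v3 v4 C
    using assms by unfold_locales
  show ?thesis by (rule main)
qed

end
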